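(* Let $(\mathscr X,d)$ be a metric space and $(\mu_n)_{n\geqslant1}$ a sequence of positive Borel measures on $\mathscr X$ such that $M:=\limsup_{n\to\infty}\mu_n(\mathscr X)<\infty$. Let $\varphi:[0,\infty)\to[0,\infty)$ be an increasing function such that $\varphi(s)\leqslant s/2$ for all $s$ and $\lim_{s\to\infty}\varphi(s)=\infty$. Then either $(\mu_n)_{n\geqslant1}$ is a vanishing sequence, or there exists an increasing mapping $j:\mathbf N^*\to\mathbf N^*$ such that the subsequence $(\mu_{j(n)})_{n\geqslant1}$ satisfies one of the following properties: (i) There are $k\in\mathbf N^*$, positive numbers $m_1,\dots,m_k$, sequences of points $(x_n^i)_{n\geqslant1}\subset\mathscr X$ and increasing sequences of positive numbers $(r_n^i)_{n\geqslant1}$ with $r_n^i\to\infty$ as $n\to\infty$, $i\in\{1,\dots,k\}$, such that: (a) for each $n$ the balls $B(x_n^i,r_n^i)$, $i\in\{1,\dots,k\}$, are disjoint; (b) for each $i\in\{1,\dots,k\}$, $\mu_{j(n)}(B(x_n^i,\varphi(r_n^i)))\to m_i$ as $n\to\infty$, $\mu_{j(n)}\big(B(x_n^i,r_n^i)\setminus B(x_n^i,\varphi(r_n^i))\big)\leqslant \frac{1}{2^{n+i}}$, and the sequence of measures $\big({\mu_{j(n)}}_{|B(x_n^i,r_n^i)}\big)_{n\geqslant1}$ concentrates around $(x_n^i)_{n\geqslant1}$; (c) the sequence of measures $\big({\mu_{j(n)}}_{|\mathscr X\setminus\cup_{i=1}^kB(x_n^i,r_n^i)}\big)_{n\geqslant1}$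 is a vanishing sequence. (ii) There are positive numbers $m_1,\dots,m_k,\dots$ with $m_{k+1}\leqslant 2m_k$, sequences of points $(x_n^i)_{n\geqslant i}\subset\mathscr X$ and increasing sequences of positive numbers $(r_n^i)_{n\geqslant i}$ such that $r_n^k\to\infty$ as $n\to\infty$ for each fixed $k$, and: (a) for each $n$ the balls $B(x_n^1,r_n^1),\dots,B(x_n^n,r_n^n)$ are disjoint; (b) for each $i$, $\mu_{j(n)}(B(x_n^i,\varphi(r_n^i)))\to m_i$ as $n\to\infty$, $\mu_{j(n)}\big(B(x_n^i,r_n^i)\setminus B(x_n^i,\varphi(r_n^i))\big)\leqslant\frac{1}{2^{n+i}}$, and the sequence $\big({\mu_{j(n)}}_{|B(x_n^i,r_n^i)}\big)_{n\geqslant i}$ concentrates around $(x_n^i)_{n\geqslant i}$; (c) denoting, for $n\geqslant\ell$, by $\tilde q_n^\ell$ the concentration function of ${\mu_{j(n)}}_{|\mathscr X\setminus\cup_{i=1}^\ell B(x_n^i,r_n^i)}$, one has $\lim_{\ell\to\infty}\Big(\lim_{t\to\infty}\big(\limsup_{n\to\infty}\tilde q_n^\ell(t)\big)\Big)=0$; (d) the sequence of measures $\big({\mu_{j(n)}}_{|\mathscr X\setminus\cup_{i=1}^nB(x_n^i,r_n^i)}\big)_{n\geqslant1}$ is a vanishing sequence.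
   Context: $B(x,r)$ denotes the open ball of center $x$ and radius $r$ in $\mathscr X$. For a Borel measure $\mu$ and a Borel set $A$, $\mu_{|A}(E)=\mu(A\cap E)$. The concentration function of a positive Borel measure $\mu$ on $\mathscr X$ is $q(t)=\sup_{x\in\mathscr X}\mu(B(x,t))$, $t\geqslant0$. A sequence $(\nu_n)$ of positive Borel measures concentrates around a sequence of points $(x_n)\subset\mathscr X$ if for every $\varepsilon>0$ there is $R_\varepsilon>0$ with $\nu_n(\mathscr X\setminus B(x_n,R_\varepsilon))<\varepsilon$ for all $n$. A sequence $(\nu_n)$ is vanishing if for every $r>0$, $\sup_{x\in\mathscr X}\nu_n(B(x,r))\to0$ as $n\to\infty$. *)

theory Defs
  imports "HOL-Analysis.Analysis"
begin

definition restr :: "'a measure \<Rightarrow> 'a set \<Rightarrow> 'a measure" where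
  "restr \<mu> A = density \<mu> (indicator A)"

definition conc_fun :: "'a::metric_space measure \<Rightarrow> real \<Rightarrow> ennreal" where
  "conc_fun \<mu> t = (SUP x. emeasure \<mu> (ball x t))"

definition vanishing :: "(nat \<Rightarrow> 'a::metric_space measure) \<Rightarrow> bool" where
  "vanishing \<nu> \<longleftrightarrow> (\<forall>r>0. (\<lambda>n. conc_fun (\<nu> n) r) \<longlonglongrightarrow> 0)"

definition concentrates_from :: "nat \<Rightarrow> (nat \<Rightarrow> 'a::metric_space measure) \<Rightarrow> (nat \<Rightarrow> 'a) \<Rightarrow> bool" where
  "concentrates_from n0 \<nu> x \<longleftrightarrow>
     (\<forall>\<epsilon>::real>0. \<exists>R>0. \<forall>n\<ge>n0. emeasure (\<nu> n) (UNIV - ball (x n) R) < ennreal \<epsilon>)"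

end

theory Submission
  imports Defs
begin


definition along :: "nat set \<Rightarrow> nat filter" where
  "along S = inf sequentially (principal S)"

lemma eventually_along: "eventually P (along S) \<longleftrightarrow> (\<exists>N. \<forall>n\<ge>N. n \<in> S \<longrightarrow> P n)"
  unfolding along_def eventually_inf_principal eventually_sequentially by simp

lemma along_mono: "S \<subseteq> T \<Longrightarrow> along S \<le> along T"
  unfolding along_def by (simp add: inf.coboundedI2)

lemma along_nonbot: "infinite S \<Longrightarrow> along S \<noteq> bot"
proof
  assume "infinite S" "along S = bot"
  then have "eventually (\<lambda>_. False) (along S)" by simp
  then obtain N where "\<forall>n\<ge>N. n \<in> S \<longrightarrow> False" unfolding eventually_along by blast
  then have "S \<subseteq> {..<N}" by (meson lessThan_iff not_le subsetI)
  with \<open>infinite S\<close> show False using finite_subset by blast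
qed

lemma filtermap_strict_mono:
  assumes "strict_mono \<sigma>" shows "filtermap \<sigma> sequentially = along (range \<sigma>)"
proof (rule antisym)
  show "filtermap \<sigma> sequentially \<le> along (range \<sigma>)"
    unfolding le_filter_def eventually_filtermap eventually_along eventually_sequentially
  proof (intro allI impI)
    fix P assume "\<exists>N. \<forall>n\<ge>N. n \<in> range \<sigma> \<longrightarrow> P n"
    then obtain N where N: "\<forall>n\<ge>N. n \<in> range \<sigma> \<longrightarrow> P n" by blast
    have "\<forall>n\<ge>N. P (\<sigma> n)"
    proof (intro allI impI)
      fix n assume "N \<le> n"
      moreover have "n \<le> \<sigma> n" using strict_mono_imp_increasing[OF assms] .
      ultimately show "P (\<sigma> n)" using N by simp
    qed
    then show "\<exists>N. \<forall>n\<ge>N. P (\<sigma> n)" by blast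
  qed
  show "along (range \<sigma>) \<le> filtermap \<sigma> sequentially"
    unfolding le_filter_def eventually_filtermap eventually_along eventually_sequentially
  proof (intro allI impI)
    fix P assume "\<exists>N. \<forall>n\<ge>N. P (\<sigma> n)"
    then obtain N where N: "\<forall>n\<ge>N. P (\<sigma> n)" by blast
    show "\<exists>N. \<forall>n\<ge>N. n \<in> range \<sigma> \<longrightarrow> P n"
    proof (intro exI allI impI)
      fix n assume "\<sigma> N \<le> n" "n \<in> range \<sigma>"
      then obtain m where m: "n = \<sigma> m" by blast
      with \<open>\<sigma> N \<le> n\<close> have "N \<le> m" using assms by (simp add: strict_mono_less_eq)
      with N m show "P n" by simp
    qed
  qed
qed

lemma tendsto_along_iff:
  assumes "strict_mono \<sigma>"
  shows "(f \<longlongrightarrow> L) (along (range \<sigma>)) \<longleftrightarrow> ((f \<circ> \<sigma>) \<longlongrightarrow> L) sequentially"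
  unfolding filtermap_strict_mono[OF assms, symmetric] filterlim_filtermap comp_def by simp

lemma diag_lemma:
  fixes a :: "nat \<Rightarrow> nat \<Rightarrow> real"
  assumes S: "infinite S" and bd: "\<And>R n. n \<in> S \<Longrightarrow> \<bar>a R n\<bar> \<le> C"
  shows "\<exists>T\<subseteq>S. infinite T \<and> (\<forall>R. \<exists>L. (a R \<longlongrightarrow> L) (along T))"
proof -
  define e where "e = enumerate S"
  have e: "strict_mono e" "\<And>n. e n \<in> S" using S by (auto simp: e_def strict_mono_enumerate enumerate_in_set)
  define K :: "(nat \<Rightarrow> real) set" where "K = Pi\<^sub>E UNIV (\<lambda>_. {-C..C})"
  have "compactin euclidean K"
    unfolding K_def euclidean_product_topology[symmetric] compactin_PiE by (intro disjI2 ballI) simp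
  then have "seq_compact K" by (simp add: compact_imp_seq_compact)
  define f where "f n = (\<lambda>R. a R (e n))" for n
  have fK: "f n \<in> K" for n
  proof -
    have "a R (e n) \<in> {-C..C}" for R using bd[of "e n" R] e(2)[of n] by (simp add: abs_le_iff)
    then show ?thesis unfolding K_def f_def by (simp add: PiE_iff)
  qed
  obtain l h where h: "strict_mono h" and lim: "(f \<circ> h) \<longlonglongrightarrow> l"
    using seq_compactE[OF \<open>seq_compact K\<close>] fK by blast
  have lim2: "(\<lambda>n. (f \<circ> h) n R) \<longlonglongrightarrow> l R" for R
  proof -
    have "continuous_on UNIV (\<lambda>x::nat\<Rightarrow>real. x R)" by simp
    from continuous_on_tendsto_compose[OF this lim] show ?thesis by simp
  qed
  show ?thesis
  proof (rule exI[of _ "range (e \<circ> h)"], intro conjI allI)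
    show "range (e \<circ> h) \<subseteq> S" using e by auto
    show "infinite (range (e \<circ> h))" by (rule range_inj_infinite, rule strict_mono_imp_inj_on, rule strict_mono_o[OF e(1) h])
    fix R show "\<exists>L. (a R \<longlongrightarrow> L) (along (range (e \<circ> h)))"
    proof (rule exI[of _ "l R"])
      have eq: "(a R \<circ> (e \<circ> h)) = (\<lambda>n. (f \<circ> h) n R)" by (simp add: f_def fun_eq_iff)
      show "(a R \<longlongrightarrow> l R) (along (range (e \<circ> h)))"
        unfolding tendsto_along_iff[OF strict_mono_o[OF e(1) h]] eq by (rule lim2)
    qed
  qed
qed



locale L =
  fixes \<mu> :: "nat \<Rightarrow> 'a::metric_space measure" and \<phi> :: "real \<Rightarrow> real" and N0 :: nat and C :: real
  assumes N0: "1 \<le> N0"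
    and sets_mu: "\<And>n. N0 \<le> n \<Longrightarrow> sets (\<mu> n) = sets borel"
    and fin: "\<And>n. N0 \<le> n \<Longrightarrow> emeasure (\<mu> n) UNIV \<le> ennreal C"
    and Cpos: "0 < C"
    and phi_nonneg: "\<And>s. s \<ge> 0 \<Longrightarrow> \<phi> s \<ge> 0"
    and phi_mono: "mono_on {0..} \<phi>"
    and phi_half: "\<And>s. s \<ge> 0 \<Longrightarrow> \<phi> s \<le> s / 2"
    and phi_lim: "filterlim \<phi> at_top at_top"
begin

abbreviation nu where "nu n A \<equiv> measure (\<mu> n) A"

lemma space_mu: "N0 \<le> n \<Longrightarrow> space (\<mu> n) = UNIV"
  using sets_eq_imp_space_eq[OF sets_mu] by simp

lemma meas: "N0 \<le> n \<Longrightarrow> A \<in> sets borel \<Longrightarrow> A \<in> sets (\<mu> n)"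
  by (simp add: sets_mu)

lemma finite_mu: "N0 \<le> n \<Longrightarrow> finite_measure (\<mu> n)"
proof (rule finite_measureI)
  assume n: "N0 \<le> n"
  have "emeasure (\<mu> n) (space (\<mu> n)) \<le> ennreal C" using fin[OF n] space_mu[OF n] by simp
  then show "emeasure (\<mu> n) (space (\<mu> n)) \<noteq> \<infinity>" using ennreal_less_top
    by (metis infinity_ennreal_def top.not_eq_extremum leD)
qed

lemma emeasure_nu: "N0 \<le> n \<Longrightarrow> emeasure (\<mu> n) A = ennreal (nu n A)"
  using finite_measure.emeasure_eq_measure[OF finite_mu] by blast

lemma nu_le_C: "N0 \<le> n \<Longrightarrow> nu n A \<le> C"
proof -
  assume n: "N0 \<le> n"
  have "nu n A \<le> nu n (space (\<mu> n))" by (rule finite_measure.bounded_measure[OF finite_mu[OF n]])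
  also have "\<dots> = nu n UNIV" using space_mu[OF n] by simp
  finally have 1: "nu n A \<le> nu n UNIV" .
  have "ennreal (nu n UNIV) \<le> ennreal C" using fin[OF n] emeasure_nu[OF n] by simp
  then have "nu n UNIV \<le> C" using Cpos by (simp add: ennreal_le_iff2)
  with 1 show ?thesis by simp
qed

lemma nu_mono: "N0 \<le> n \<Longrightarrow> B \<in> sets borel \<Longrightarrow> A \<subseteq> B \<Longrightarrow> nu n A \<le> nu n B"
  by (rule finite_measure.finite_measure_mono[OF finite_mu]) (auto simp: sets_mu)

lemma nu_ball_mono: "N0 \<le> n \<Longrightarrow> r \<le> r' \<Longrightarrow> nu n (ball x r) \<le> nu n (ball x r')"
  by (rule nu_mono) auto

definition V :: "nat set \<Rightarrow> (nat \<Rightarrow> nat \<Rightarrow> 'a) \<Rightarrow> nat \<Rightarrow> real set" where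
  "V S X l = {v. \<exists>T y t. T \<subseteq> S \<and> infinite T \<and>
      (\<forall>i\<in>{1..l}. filterlim (\<lambda>n. dist (y n) (X i n)) at_top (along T)) \<and>
      ((\<lambda>n. nu n (ball (y n) t)) \<longlongrightarrow> v) (along T)}"

definition D :: "nat set \<Rightarrow> (nat \<Rightarrow> nat \<Rightarrow> 'a) \<Rightarrow> nat \<Rightarrow> real" where
  "D S X l = Sup (insert 0 (V S X l))"

lemma V_le_C: assumes "S \<subseteq> {N0..}" "v \<in> V S X l" shows "0 \<le> v \<and> v \<le> C"
proof -
  from assms(2) obtain T y t where T: "T \<subseteq> S" "infinite T"
    and lim: "((\<lambda>n. nu n (ball (y n) t)) \<longlongrightarrow> v) (along T)" unfolding V_def by blast
  have ev: "eventually (\<lambda>n. n \<in> T) (along T)" unfolding eventually_along by blast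
  have ev2: "eventually (\<lambda>n. nu n (ball (y n) t) \<le> C) (along T)"
    using ev by eventually_elim (use T assms(1) nu_le_C in auto)
  have ev3: "eventually (\<lambda>n. 0 \<le> nu n (ball (y n) t)) (along T)" by simp
  show ?thesis using tendsto_upperbound[OF lim ev2 along_nonbot[OF T(2)]]
      tendsto_lowerbound[OF lim ev3 along_nonbot[OF T(2)]] by simp
qed

lemma bdd_V: assumes "S \<subseteq> {N0..}" shows "bdd_above (insert 0 (V S X l))"
proof -
  have "\<forall>x\<in>insert 0 (V S X l). x \<le> C" using V_le_C[OF assms] Cpos by auto
  then show ?thesis unfolding bdd_above_def by blast
qed

lemma D_nonneg: assumes "S \<subseteq> {N0..}" shows "0 \<le> D S X l"
  unfolding D_def by (rule cSup_upper[OF _ bdd_V[OF assms]]) simp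

lemma V_le_D: assumes "S \<subseteq> {N0..}" "v \<in> V S X l" shows "v \<le> D S X l"
  unfolding D_def by (rule cSup_upper[OF _ bdd_V[OF assms(1)]]) (simp add: assms(2))

lemma V_mono: "S' \<subseteq> S \<Longrightarrow> l \<le> l' \<Longrightarrow> V S' X l' \<subseteq> V S X l"
  unfolding V_def by auto (meson atLeastAtMost_iff dual_order.trans order_refl)

lemma D_mono: assumes "S' \<subseteq> S" "l \<le> l'" "S \<subseteq> {N0..}" shows "D S' X l' \<le> D S X l"
  unfolding D_def
proof (rule cSup_mono)
  show "bdd_above (insert 0 (V S X l))" by (rule bdd_V[OF assms(3)])
  show "\<exists>a\<in>insert 0 (V S X l). b \<le> a" if "b \<in> insert 0 (V S' X l')" for b
    using that V_mono[OF assms(1,2), of X] by auto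
qed auto

lemma V_cong: "(\<And>i. i \<in> {1..l} \<Longrightarrow> X i = X' i) \<Longrightarrow> V S X l = V S X' l"
  unfolding V_def by simp

lemma D_cong: "(\<And>i. i \<in> {1..l} \<Longrightarrow> X i = X' i) \<Longrightarrow> D S X l = D S X' l"
  unfolding D_def using V_cong by metis

lemma D_pos_ex: assumes "S \<subseteq> {N0..}" "0 < D S X l" shows "\<exists>v\<in>V S X l. D S X l / 2 < v"
proof -
  have "D S X l / 2 < Sup (insert 0 (V S X l))" using assms(2) unfolding D_def by simp
  then obtain v where v: "v \<in> insert 0 (V S X l)" "D S X l / 2 < v"
    using less_cSupE by blast
  with assms(2) have "v \<noteq> 0" by auto
  with v show ?thesis by auto
qed

definition step_ok where
  "step_ok S X l S' y q m \<longleftrightarrow> S' \<subseteq> S \<and> infinite S' \<and>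
     (\<forall>i\<in>{1..l}. filterlim (\<lambda>n. dist (y n) (X i n)) at_top (along S')) \<and>
     (\<forall>R::nat. ((\<lambda>n. nu n (ball (y n) (real R))) \<longlongrightarrow> q R) (along S')) \<and>
     incseq q \<and> (q \<longlonglongrightarrow> m) \<and> (\<forall>R. q R \<le> m) \<and>
     D S X l < 2 * m \<and> 0 < m \<and> m \<le> D S X l"

lemma step_exists:
  assumes S: "S \<subseteq> {N0..}" and D: "0 < D S X l"
  shows "\<exists>S' y q m. step_ok S X l S' y q m"
proof -
  obtain v where v: "v \<in> V S X l" "D S X l / 2 < v" using D_pos_ex[OF S D] by blast
  then obtain T y t where T: "T \<subseteq> S" "infinite T"
    and dv: "\<forall>i\<in>{1..l}. filterlim (\<lambda>n. dist (y n) (X i n)) at_top (along T)"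
    and lim: "((\<lambda>n. nu n (ball (y n) t)) \<longlongrightarrow> v) (along T)" unfolding V_def by blast
  have "\<exists>T'\<subseteq>T. infinite T' \<and> (\<forall>R. \<exists>L. ((\<lambda>n. nu n (ball (y n) (real R))) \<longlongrightarrow> L) (along T'))"
  proof (rule diag_lemma[OF T(2)])
    fix R n assume "n \<in> T"
    then have "N0 \<le> n" using T S by auto
    then show "\<bar>nu n (ball (y n) (real R))\<bar> \<le> C" using nu_le_C by simp
  qed
  then obtain T' where T': "T' \<subseteq> T" "infinite T'"
    and ex: "\<forall>R. \<exists>L. ((\<lambda>n. nu n (ball (y n) (real R))) \<longlongrightarrow> L) (along T')" by blast
  from ex obtain q where q: "\<And>R. ((\<lambda>n. nu n (ball (y n) (real R))) \<longlongrightarrow> q R) (along T')"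
    by metis
  have nb: "along T' \<noteq> bot" by (rule along_nonbot[OF T'(2)])
  have evT: "eventually (\<lambda>n. n \<in> T' \<and> N0 \<le> n) (along T')"
    unfolding eventually_along using T' T S by auto
  have qmono: "q R \<le> q R'" if "R \<le> R'" for R R'
  proof (rule tendsto_le[OF nb q q])
    show "eventually (\<lambda>n. nu n (ball (y n) (real R)) \<le> nu n (ball (y n) (real R'))) (along T')"
      using evT by eventually_elim (use that in \<open>auto intro: nu_ball_mono\<close>)
  qed
  then have inc: "incseq q" by (simp add: incseq_def)
  have qC: "q R \<le> C" for R
  proof (rule tendsto_upperbound[OF q _ nb])
    show "eventually (\<lambda>n. nu n (ball (y n) (real R)) \<le> C) (along T')"
      using evT by eventually_elim (auto intro: nu_le_C)
  qed
  have bdd: "bdd_above (range q)" by (rule bdd_aboveI2[where M=C]) (rule qC)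
  define m where "m = (SUP R. q R)"
  have qm: "q \<longlonglongrightarrow> m" unfolding m_def by (rule LIMSEQ_incseq_SUP[OF bdd inc])
  have qlem: "q R \<le> m" for R unfolding m_def by (rule cSUP_upper[OF _ bdd]) simp
  define R0 where "R0 = nat \<lceil>t\<rceil>"
  have "t \<le> real R0" unfolding R0_def by linarith
  have limT': "((\<lambda>n. nu n (ball (y n) t)) \<longlongrightarrow> v) (along T')"
    by (rule tendsto_mono[OF along_mono[OF T'(1)] lim])
  have "v \<le> q R0"
  proof (rule tendsto_le[OF nb q[of R0] limT'])
    show "eventually (\<lambda>n. nu n (ball (y n) t) \<le> nu n (ball (y n) (real R0))) (along T')"
      using evT by eventually_elim (use \<open>t \<le> real R0\<close> in \<open>auto intro: nu_ball_mono\<close>)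
  qed
  with qlem[of R0] have vm: "v \<le> m" by simp
  have SN: "T' \<subseteq> {N0..}" using T' T S by auto
  have "q R \<in> V S X l" for R
    unfolding V_def
    using T' T dv q[of R] by (intro CollectI exI[of _ T'] exI[of _ y] exI[of _ "real R"])
      (auto intro: filterlim_mono[OF _ order_refl along_mono[OF T'(1)]])
  then have "q R \<le> D S X l" for R using V_le_D[OF S] by blast
  then have mD: "m \<le> D S X l" unfolding m_def by (intro cSUP_least) auto
  have dv': "\<forall>i\<in>{1..l}. filterlim (\<lambda>n. dist (y n) (X i n)) at_top (along T')"
    using dv by (auto intro: filterlim_mono[OF _ order_refl along_mono[OF T'(1)]])
  show ?thesis
    unfolding step_ok_def
    using T' T dv' q inc qm qlem v vm mD D_nonneg[OF S]
    by (intro exI[of _ T'] exI[of _ y] exI[of _ q] exI[of _ m]) auto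
qed

end



context L begin

lemma step_ok_cong:
  assumes "\<And>i. i \<in> {1..l} \<Longrightarrow> X i = X' i"
  shows "step_ok S X l S' y q m \<longleftrightarrow> step_ok S X' l S' y q m"
proof -
  have "D S X l = D S X' l" by (rule D_cong[OF assms])
  then show ?thesis unfolding step_ok_def using assms by auto
qed

definition stepf :: "nat \<Rightarrow> nat set \<times> (nat \<Rightarrow> nat \<Rightarrow> 'a) \<times> (nat \<Rightarrow> nat \<Rightarrow> real) \<times> (nat \<Rightarrow> real)
   \<Rightarrow> nat set \<times> (nat \<Rightarrow> nat \<Rightarrow> 'a) \<times> (nat \<Rightarrow> nat \<Rightarrow> real) \<times> (nat \<Rightarrow> real)" where
  "stepf l s = (if 0 < D (fst s) (fst (snd s)) l then
     (let z = (SOME z. step_ok (fst s) (fst (snd s)) l (fst z) (fst (snd z)) (fst (snd (snd z))) (snd (snd (snd z))))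
      in (fst z, (fst (snd s))(Suc l := fst (snd z)), (fst (snd (snd s)))(Suc l := fst (snd (snd z))),
          (snd (snd (snd s)))(Suc l := snd (snd (snd z)))))
     else s)"

primrec st where
  "st 0 = ({N0..}, \<lambda>_ _. undefined, \<lambda>_ _. 0, \<lambda>_. 0)"
| "st (Suc l) = stepf l (st l)"

definition "SS l = fst (st l)"
definition "XX l = fst (snd (st l))"
definition "QQ l = fst (snd (snd (st l)))"
definition "MM l = snd (snd (snd (st l)))"
definition "Xf i = XX i i"
definition "Qf i = QQ i i"
definition "Mf i = MM i i"
definition "Dl l = D (SS l) Xf l"

lemma st_Suc_cases:
  "(0 < D (SS l) (XX l) l \<and> step_ok (SS l) (XX l) l (SS (Suc l)) (XX (Suc l) (Suc l)) (QQ (Suc l) (Suc l)) (MM (Suc l) (Suc l))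
     \<and> (\<forall>i. i \<noteq> Suc l \<longrightarrow> XX (Suc l) i = XX l i \<and> QQ (Suc l) i = QQ l i \<and> MM (Suc l) i = MM l i))
   \<or> (\<not> 0 < D (SS l) (XX l) l \<and> st (Suc l) = st l)"
  if "SS l \<subseteq> {N0..}"
proof (cases "0 < D (SS l) (XX l) l")
  case True
  define s where "s = st l"
  define z where "z = (SOME z. step_ok (fst s) (fst (snd s)) l (fst z) (fst (snd z)) (fst (snd (snd z))) (snd (snd (snd z))))"
  have "\<exists>S' y q m. step_ok (fst s) (fst (snd s)) l S' y q m"
    using step_exists[of "fst s" "fst (snd s)" l] True that by (simp add: s_def SS_def XX_def)
  then have "\<exists>z. step_ok (fst s) (fst (snd s)) l (fst z) (fst (snd z)) (fst (snd (snd z))) (snd (snd (snd z)))"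
    by auto
  then have z: "step_ok (fst s) (fst (snd s)) l (fst z) (fst (snd z)) (fst (snd (snd z))) (snd (snd (snd z)))"
    unfolding z_def by (rule someI_ex)
  have eq: "st (Suc l) = (fst z, (fst (snd s))(Suc l := fst (snd z)), (fst (snd (snd s)))(Suc l := fst (snd (snd z))),
          (snd (snd (snd s)))(Suc l := snd (snd (snd z))))"
    using True by (simp add: stepf_def s_def z_def SS_def XX_def Let_def)
  show ?thesis
    apply (rule disjI1)
    using True z eq by (simp add: SS_def XX_def QQ_def MM_def s_def)
next
  case False
  then have "st (Suc l) = st l" by (simp add: stepf_def SS_def XX_def)
  with False show ?thesis by blast
qed

lemma SS_basic: "SS l \<subseteq> {N0..} \<and> infinite (SS l)"
proof (induction l)
  case 0
  then show ?case by (simp add: SS_def infinite_Ici)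
next
  case (Suc l)
  from st_Suc_cases[OF Suc[THEN conjunct1]] show ?case
  proof
    assume "0 < D (SS l) (XX l) l \<and> step_ok (SS l) (XX l) l (SS (Suc l)) (XX (Suc l) (Suc l)) (QQ (Suc l) (Suc l)) (MM (Suc l) (Suc l))
     \<and> (\<forall>i. i \<noteq> Suc l \<longrightarrow> XX (Suc l) i = XX l i \<and> QQ (Suc l) i = QQ l i \<and> MM (Suc l) i = MM l i)"
    then show ?thesis using Suc unfolding step_ok_def by auto
  next
    assume "\<not> 0 < D (SS l) (XX l) l \<and> st (Suc l) = st l"
    then show ?thesis using Suc by (simp add: SS_def)
  qed
qed

lemma SS_sub: "SS l \<subseteq> {N0..}" and SS_inf: "infinite (SS l)"
  using SS_basic by auto

lemma SS_Suc: "SS (Suc l) \<subseteq> SS l"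
  using st_Suc_cases[OF SS_sub, of l] unfolding step_ok_def by (auto simp: SS_def)

lemma SS_dec: "i \<le> i' \<Longrightarrow> SS i' \<subseteq> SS i"
  by (induction i' rule: dec_induct) (use SS_Suc in auto)

lemma XX_stable: "i \<le> l \<Longrightarrow> XX l i = Xf i \<and> QQ l i = Qf i \<and> MM l i = Mf i"
proof (induction l)
  case 0
  then show ?case by (simp add: Xf_def Qf_def Mf_def)
next
  case (Suc l)
  show ?case
  proof (cases "i = Suc l")
    case True
    then show ?thesis by (simp add: Xf_def Qf_def Mf_def)
  next
    case False
    with Suc.prems have il: "i \<le> l" by simp
    from st_Suc_cases[OF SS_sub, of l] False Suc.IH[OF il] show ?thesis
      by (auto simp: XX_def QQ_def MM_def)
  qed
qed

lemma XX_eq: "i \<in> {1..l} \<Longrightarrow> XX l i = Xf i"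
  using XX_stable by auto

lemma Dl_eq: "D (SS l) (XX l) l = Dl l"
  unfolding Dl_def by (rule D_cong) (rule XX_eq)

lemma step_Dl:
  assumes "0 < Dl l"
  shows "step_ok (SS l) Xf l (SS (Suc l)) (Xf (Suc l)) (Qf (Suc l)) (Mf (Suc l))"
proof -
  from st_Suc_cases[OF SS_sub, of l] assms Dl_eq[of l]
  have "step_ok (SS l) (XX l) l (SS (Suc l)) (XX (Suc l) (Suc l)) (QQ (Suc l) (Suc l)) (MM (Suc l) (Suc l))"
    by auto
  moreover have "step_ok (SS l) (XX l) l (SS (Suc l)) (XX (Suc l) (Suc l)) (QQ (Suc l) (Suc l)) (MM (Suc l) (Suc l))
    \<longleftrightarrow> step_ok (SS l) Xf l (SS (Suc l)) (XX (Suc l) (Suc l)) (QQ (Suc l) (Suc l)) (MM (Suc l) (Suc l))"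
    by (rule step_ok_cong) (rule XX_eq)
  ultimately show ?thesis
    by (simp add: Xf_def Qf_def Mf_def)
qed

lemma Dl_nonneg: "0 \<le> Dl l"
  unfolding Dl_def by (rule D_nonneg[OF SS_sub])

lemma Dl_Suc: "Dl (Suc l) \<le> Dl l"
  unfolding Dl_def by (rule D_mono[OF SS_Suc _ SS_sub]) simp

lemma Dl_dec: "l \<le> l' \<Longrightarrow> Dl l' \<le> Dl l"
  by (induction l' rule: dec_induct) (use Dl_Suc order_trans in blast)+

end



lemma emeasure_restr:
  assumes "A \<in> sets M" "E \<in> sets M"
  shows "emeasure (restr M A) E = emeasure M (A \<inter> E)"
proof -
  have "emeasure (restr M A) E = (\<integral>\<^sup>+x. indicator A x * indicator E x \<partial>M)"
    unfolding restr_def using assms by (subst emeasure_density) auto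
  also have "\<dots> = (\<integral>\<^sup>+x. indicator (A \<inter> E) x \<partial>M)"
    by (simp add: indicator_inter_arith)
  also have "\<dots> = emeasure M (A \<inter> E)" using assms by (simp add: nn_integral_indicator)
  finally show ?thesis .
qed

lemma refine_one:
  fixes f :: "nat \<Rightarrow> real"
  assumes "infinite T"
  shows "\<exists>T'\<subseteq>T. infinite T' \<and> ((\<exists>K. \<forall>n\<in>T'. f n \<le> K) \<or> filterlim f at_top (along T'))"
proof (cases "\<exists>K. infinite {n\<in>T. f n \<le> K}")
  case True
  then obtain K where "infinite {n\<in>T. f n \<le> K}" by blast
  then show ?thesis by (intro exI[of _ "{n\<in>T. f n \<le> K}"]) auto
next
  case False
  have "filterlim f at_top (along T)"
    unfolding filterlim_at_top
  proof
    fix Z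
    have "finite {n\<in>T. f n \<le> Z}" using False by blast
    then obtain N where N: "{n\<in>T. f n \<le> Z} \<subseteq> {..<N}" using finite_nat_bounded by blast
    show "eventually (\<lambda>n. Z \<le> f n) (along T)"
      unfolding eventually_along
    proof (intro exI allI impI)
      fix n assume "N \<le> n" "n \<in> T"
      with N have "\<not> f n \<le> Z" by auto
      then show "Z \<le> f n" by simp
    qed
  qed
  with assms show ?thesis by blast
qed

lemma refine_finite:
  fixes d :: "nat \<Rightarrow> nat \<Rightarrow> real"
  assumes "finite I" "infinite T"
  shows "\<exists>T'\<subseteq>T. infinite T' \<and> (\<forall>i\<in>I. (\<exists>K. \<forall>n\<in>T'. d i n \<le> K) \<or> filterlim (d i) at_top (along T'))"
  using assms(1)
proof (induction I rule: finite_induct)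
  case empty
  then show ?case using assms(2) by blast
next
  case (insert i I)
  then obtain T1 where T1: "T1 \<subseteq> T" "infinite T1"
    and P1: "\<forall>i\<in>I. (\<exists>K. \<forall>n\<in>T1. d i n \<le> K) \<or> filterlim (d i) at_top (along T1)" by blast
  obtain T2 where T2: "T2 \<subseteq> T1" "infinite T2"
    and P2: "(\<exists>K. \<forall>n\<in>T2. d i n \<le> K) \<or> filterlim (d i) at_top (along T2)"
    using refine_one[OF T1(2), of "d i"] by blast
  have "\<forall>i\<in>I. (\<exists>K. \<forall>n\<in>T2. d i n \<le> K) \<or> filterlim (d i) at_top (along T2)"
  proof
    fix i' assume "i' \<in> I"
    with P1 have "(\<exists>K. \<forall>n\<in>T1. d i' n \<le> K) \<or> filterlim (d i') at_top (along T1)" by blast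
    then show "(\<exists>K. \<forall>n\<in>T2. d i' n \<le> K) \<or> filterlim (d i') at_top (along T2)"
    proof
      assume "\<exists>K. \<forall>n\<in>T1. d i' n \<le> K" then show ?thesis using T2 by blast
    next
      assume "filterlim (d i') at_top (along T1)"
      then show ?thesis using filterlim_mono[OF _ order_refl along_mono[OF T2(1)]] by blast
    qed
  qed
  with P2 T1 T2 show ?case by (intro exI[of _ T2]) auto
qed

lemma balls_disjoint:
  fixes x y :: "'a::metric_space"
  assumes "r + s \<le> dist x y"
  shows "ball x r \<inter> ball y s = {}"
proof (rule ccontr)
  assume "ball x r \<inter> ball y s \<noteq> {}"
  then obtain z where "dist x z < r" "dist y z < s" by auto
  moreover have "dist x y \<le> dist x z + dist z y" by (rule dist_triangle)
  moreover have "dist z y = dist y z" by (rule dist_commute)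
  ultimately have "dist x y < r + s" by linarith
  with assms show False by simp
qed

context L begin

lemma conc_fun_restr:
  assumes "N0 \<le> n" "A \<in> sets borel"
  shows "conc_fun (restr (\<mu> n) A) t = (SUP x. ennreal (nu n (A \<inter> ball x t)))"
  unfolding conc_fun_def
  using emeasure_restr[of A "\<mu> n"] assms by (simp add: sets_mu emeasure_nu)

end

locale S2 = L \<mu> \<phi> N0 C for \<mu> :: "nat \<Rightarrow> 'a::metric_space measure" and \<phi> N0 C +
  fixes a :: "nat \<Rightarrow> nat" and Sq :: "nat \<Rightarrow> nat set" and Xc :: "nat \<Rightarrow> nat \<Rightarrow> 'a"
    and Qc :: "nat \<Rightarrow> nat \<Rightarrow> real" and Mc :: "nat \<Rightarrow> real"
  assumes a_mono: "mono a"
    and Sq_sub: "\<And>i. Sq i \<subseteq> {N0..}" and Sq_inf: "\<And>i. infinite (Sq i)"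
    and Sq_dec: "\<And>i i'. i \<le> i' \<Longrightarrow> Sq i' \<subseteq> Sq i"
    and prof_conv: "\<And>i p R. 1 \<le> i \<Longrightarrow> i \<le> a p \<Longrightarrow> ((\<lambda>n. nu n (ball (Xc i n) (real R))) \<longlongrightarrow> Qc i R) (along (Sq i))"
    and prof_lim: "\<And>i p. 1 \<le> i \<Longrightarrow> i \<le> a p \<Longrightarrow> Qc i \<longlonglongrightarrow> Mc i"
    and prof_inc: "\<And>i p. 1 \<le> i \<Longrightarrow> i \<le> a p \<Longrightarrow> incseq (Qc i)"
    and prof_le: "\<And>i p R. 1 \<le> i \<Longrightarrow> i \<le> a p \<Longrightarrow> Qc i R \<le> Mc i"
    and prof_pos: "\<And>i p. 1 \<le> i \<Longrightarrow> i \<le> a p \<Longrightarrow> 0 < Mc i"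
    and prof_div: "\<And>i p i'. 1 \<le> i \<Longrightarrow> i \<le> a p \<Longrightarrow> 1 \<le> i' \<Longrightarrow> i' < i \<Longrightarrow>
        filterlim (\<lambda>n. dist (Xc i n) (Xc i' n)) at_top (along (Sq i))"
begin

definition valid where "valid i \<longleftrightarrow> 1 \<le> i \<and> (\<exists>p. i \<le> a p)"

definition e :: "nat \<Rightarrow> nat \<Rightarrow> real" where "e i p = 1 / 2 ^ (p + i + 2)"

lemma e_pos: "0 < e i p" by (simp add: e_def)

lemma e_mono: "p \<le> p' \<Longrightarrow> e i p' \<le> e i p"
  unfolding e_def by (intro divide_left_mono) (auto intro: power_increasing)

definition G :: "nat \<Rightarrow> nat \<Rightarrow> nat" where
  "G i p = (LEAST N::nat. p < N \<and> Mc i - Qc i (nat \<lfloor>\<phi> (real N)\<rfloor>) < e i p)"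

lemma G_ex:
  assumes "valid i"
  shows "\<exists>N::nat. p < N \<and> Mc i - Qc i (nat \<lfloor>\<phi> (real N)\<rfloor>) < e i p"
proof -
  from assms obtain p0 where i: "1 \<le> i" "i \<le> a p0" unfolding valid_def by blast
  have "eventually (\<lambda>R. dist (Qc i R) (Mc i) < e i p) sequentially"
    using prof_lim[OF i] e_pos tendsto_iff by blast
  then obtain R0 where R0: "\<And>R. R \<ge> R0 \<Longrightarrow> dist (Qc i R) (Mc i) < e i p"
    unfolding eventually_sequentially by blast
  have "eventually (\<lambda>s. real R0 \<le> \<phi> s) at_top" using phi_lim filterlim_at_top by blast
  then obtain s0 where s0: "\<And>s. s \<ge> s0 \<Longrightarrow> real R0 \<le> \<phi> s" unfolding eventually_at_top_linorder by blast
  define N where "N = max (Suc p) (nat \<lceil>s0\<rceil>)"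
  have "s0 \<le> real N" unfolding N_def by linarith
  then have "real R0 \<le> \<phi> (real N)" by (rule s0)
  then have "R0 \<le> nat \<lfloor>\<phi> (real N)\<rfloor>" by linarith
  then have "dist (Qc i (nat \<lfloor>\<phi> (real N)\<rfloor>)) (Mc i) < e i p" by (rule R0)
  then have "Mc i - Qc i (nat \<lfloor>\<phi> (real N)\<rfloor>) < e i p" by (simp add: dist_real_def)
  moreover have "p < N" unfolding N_def by simp
  ultimately show ?thesis by blast
qed

lemma G_prop:
  assumes "valid i"
  shows "p < G i p \<and> Mc i - Qc i (nat \<lfloor>\<phi> (real (G i p))\<rfloor>) < e i p"
  unfolding G_def by (rule LeastI_ex[OF G_ex[OF assms]])

lemma G_mono:
  assumes "valid i" "p \<le> p'"
  shows "G i p \<le> G i p'"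
  unfolding G_def[of i p]
proof (rule Least_le)
  have "p' < G i p' \<and> Mc i - Qc i (nat \<lfloor>\<phi> (real (G i p'))\<rfloor>) < e i p'" by (rule G_prop[OF assms(1)])
  with e_mono[OF assms(2), of i] assms(2)
  show "p < G i p' \<and> Mc i - Qc i (nat \<lfloor>\<phi> (real (G i p'))\<rfloor>) < e i p" by auto
qed

definition good where
  "good p n \<longleftrightarrow> (\<forall>i\<in>{1..a p}. \<forall>i'\<in>{1..a p}. i \<noteq> i' \<longrightarrow> real (G i p) + real (G i' p) \<le> dist (Xc i n) (Xc i' n))
     \<and> (\<forall>i\<in>{1..a p}. \<forall>q\<in>{..G i p}. \<bar>nu n (ball (Xc i n) (real q)) - Qc i q\<bar> \<le> e i p)"

lemma ev_good: "eventually (good p) (along (Sq (a p)))"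
proof -
  have 1: "eventually (\<lambda>n. real (G i p) + real (G i' p) \<le> dist (Xc i n) (Xc i' n)) (along (Sq (a p)))"
    if i: "i \<in> {1..a p}" "i' \<in> {1..a p}" "i \<noteq> i'" for i i'
  proof (cases "i' < i")
    case True
    have "filterlim (\<lambda>n. dist (Xc i n) (Xc i' n)) at_top (along (Sq i))"
      using prof_div[of i p i'] i True by auto
    then have "filterlim (\<lambda>n. dist (Xc i n) (Xc i' n)) at_top (along (Sq (a p)))"
      using filterlim_mono[OF _ order_refl along_mono[OF Sq_dec[of i "a p"]]] i by auto
    then show ?thesis unfolding filterlim_at_top by blast
  next
    case False
    with i have lt: "i < i'" by auto
    have "filterlim (\<lambda>n. dist (Xc i' n) (Xc i n)) at_top (along (Sq i'))"
      using prof_div[of i' p i] i lt by auto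
    then have "filterlim (\<lambda>n. dist (Xc i' n) (Xc i n)) at_top (along (Sq (a p)))"
      using filterlim_mono[OF _ order_refl along_mono[OF Sq_dec[of i' "a p"]]] i by auto
    then show ?thesis unfolding filterlim_at_top by (simp add: dist_commute)
  qed
  have 2: "eventually (\<lambda>n. \<bar>nu n (ball (Xc i n) (real q)) - Qc i q\<bar> \<le> e i p) (along (Sq (a p)))"
    if i: "i \<in> {1..a p}" for i q
  proof -
    have "((\<lambda>n. nu n (ball (Xc i n) (real q))) \<longlongrightarrow> Qc i q) (along (Sq i))"
      using prof_conv[of i p q] i by auto
    then have "((\<lambda>n. nu n (ball (Xc i n) (real q))) \<longlongrightarrow> Qc i q) (along (Sq (a p)))"
      using tendsto_mono[OF along_mono[OF Sq_dec[of i "a p"]]] i by auto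
    then have "eventually (\<lambda>n. dist (nu n (ball (Xc i n) (real q))) (Qc i q) < e i p) (along (Sq (a p)))"
      by (rule tendstoD[OF _ e_pos])
    then show ?thesis by eventually_elim (simp add: dist_real_def)
  qed
  have "eventually (\<lambda>n. \<forall>i\<in>{1..a p}. \<forall>i'\<in>{1..a p}. i \<noteq> i' \<longrightarrow> real (G i p) + real (G i' p) \<le> dist (Xc i n) (Xc i' n)) (along (Sq (a p)))"
    using 1 by (intro eventually_ball_finite ballI) (auto intro!: eventually_ball_finite)
  moreover have "eventually (\<lambda>n. \<forall>i\<in>{1..a p}. \<forall>q\<in>{..G i p}. \<bar>nu n (ball (Xc i n) (real q)) - Qc i q\<bar> \<le> e i p) (along (Sq (a p)))"
    using 2 by (intro eventually_ball_finite ballI) (auto intro!: eventually_ball_finite)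
  ultimately show ?thesis unfolding good_def by (rule eventually_conj)
qed

lemma good_ex: "\<exists>n. n \<in> Sq (a p) \<and> c < n \<and> good p n"
proof -
  obtain N where N: "\<And>n. n \<ge> N \<Longrightarrow> n \<in> Sq (a p) \<Longrightarrow> good p n"
    using ev_good[of p] unfolding eventually_along by blast
  obtain n where n: "n \<in> Sq (a p)" "max N (Suc c) \<le> n"
    using Sq_inf[of "a p"] unfolding infinite_nat_iff_unbounded_le by blast
  then show ?thesis using N[of n] by auto
qed

primrec jj where
  "jj 0 = (SOME n. n \<in> Sq (a 0) \<and> good 0 n)"
| "jj (Suc p) = (SOME n. n \<in> Sq (a (Suc p)) \<and> jj p < n \<and> good (Suc p) n)"

lemma jj_prop: "jj p \<in> Sq (a p) \<and> good p (jj p)"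
proof (cases p)
  case 0
  have "\<exists>n. n \<in> Sq (a 0) \<and> good 0 n" using good_ex[of 0 0] by blast
  from someI_ex[OF this] show ?thesis using 0 by simp
next
  case (Suc p')
  have "\<exists>n. n \<in> Sq (a (Suc p')) \<and> jj p' < n \<and> good (Suc p') n" using good_ex by blast
  from someI_ex[OF this] show ?thesis using Suc by simp
qed

lemma jj_Suc: "jj p < jj (Suc p)"
proof -
  have "\<exists>n. n \<in> Sq (a (Suc p)) \<and> jj p < n \<and> good (Suc p) n" using good_ex by blast
  from someI_ex[OF this] show ?thesis by simp
qed

lemma jj_mono: "strict_mono jj"
  using jj_Suc by (simp add: strict_mono_Suc_iff)

lemma jj_N0: "N0 \<le> jj p"
  using jj_prop[of p] Sq_sub by auto

lemma jj_good: "good p (jj p)" using jj_prop by blast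

lemma jj_in: "l \<le> a p \<Longrightarrow> jj p \<in> Sq l"
  using jj_prop[of p] Sq_dec[of l "a p"] by auto

end



context S2 begin

lemma active_valid: "i \<in> {1..a p} \<Longrightarrow> valid i"
  unfolding valid_def by auto

lemma active_later: "i \<le> a p0 \<Longrightarrow> p0 \<le> p \<Longrightarrow> i \<le> a p"
  using a_mono by (meson monoD order_trans)

lemma G_pos: "valid i \<Longrightarrow> 0 < real (G i p)"
  using G_prop[of i p] by simp

lemma G_mono': "valid i \<Longrightarrow> mono (\<lambda>p. real (G i p))"
  using G_mono by (simp add: mono_def)

lemma G_lim: "valid i \<Longrightarrow> filterlim (\<lambda>p. real (G i p)) at_top sequentially"
  unfolding filterlim_at_top
proof
  fix Z assume v: "valid i"
  show "eventually (\<lambda>p. Z \<le> real (G i p)) sequentially"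
    unfolding eventually_sequentially
  proof (intro exI allI impI)
    fix p assume "nat \<lceil>Z\<rceil> \<le> p"
    moreover have "p < G i p" using G_prop[OF v] by blast
    ultimately show "Z \<le> real (G i p)" by linarith
  qed
qed

lemma disj: "disjoint_family_on (\<lambda>i. ball (Xc i (jj p)) (real (G i p))) {1..a p}"
  unfolding disjoint_family_on_def
proof (intro ballI impI)
  fix i i' assume "i \<in> {1..a p}" "i' \<in> {1..a p}" "i \<noteq> i'"
  then have "real (G i p) + real (G i' p) \<le> dist (Xc i (jj p)) (Xc i' (jj p))"
    using jj_good[of p] unfolding good_def by blast
  then show "ball (Xc i (jj p)) (real (G i p)) \<inter> ball (Xc i' (jj p)) (real (G i' p)) = {}"
    by (rule balls_disjoint)
qed

lemma bnd: "i \<in> {1..a p} \<Longrightarrow> q \<le> G i p \<Longrightarrow> \<bar>nu (jj p) (ball (Xc i (jj p)) (real q)) - Qc i q\<bar> \<le> e i p"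
  using jj_good[of p] unfolding good_def by auto

lemma Qc_mono: "i \<in> {1..a p} \<Longrightarrow> R \<le> R' \<Longrightarrow> Qc i R \<le> Qc i R'"
  using prof_inc[of i p] by (auto simp: incseq_def)

lemma est:
  assumes i: "i \<in> {1..a p}"
  defines "g \<equiv> G i p" and "x \<equiv> Xc i (jj p)" and "n \<equiv> jj p"
  shows "Mc i - 2 * e i p \<le> nu n (ball x (\<phi> (real g)))"
    and "nu n (ball x (\<phi> (real g))) \<le> nu n (ball x (real g))"
    and "nu n (ball x (real g)) \<le> Mc i + e i p"
    and "0 \<le> \<phi> (real g)" and "\<phi> (real g) \<le> real g"
proof -
  have v: "valid i" by (rule active_valid[OF i])
  have N: "N0 \<le> n" unfolding n_def by (rule jj_N0)
  define q0 where "q0 = nat \<lfloor>\<phi> (real g)\<rfloor>"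
  show ph0: "0 \<le> \<phi> (real g)" by (rule phi_nonneg) simp
  have ph1: "\<phi> (real g) \<le> real g / 2" by (rule phi_half) simp
  then show ph2: "\<phi> (real g) \<le> real g" by simp
  have q0g: "q0 \<le> g" unfolding q0_def using ph0 ph2 by (simp add: nat_le_iff floor_le_iff)
  have q0phi: "real q0 \<le> \<phi> (real g)" unfolding q0_def using ph0 by linarith
  have gp: "Mc i - Qc i q0 < e i p" using G_prop[OF v, of p] unfolding q0_def g_def by blast
  have "\<bar>nu n (ball x (real q0)) - Qc i q0\<bar> \<le> e i p"
    unfolding n_def x_def by (rule bnd[OF i]) (simp add: q0g[unfolded g_def])
  moreover have "nu n (ball x (real q0)) \<le> nu n (ball x (\<phi> (real g)))"
    by (rule nu_ball_mono[OF N q0phi])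
  ultimately show "Mc i - 2 * e i p \<le> nu n (ball x (\<phi> (real g)))" using gp by linarith
  show "nu n (ball x (\<phi> (real g))) \<le> nu n (ball x (real g))"
    by (rule nu_ball_mono[OF N ph2])
  have "\<bar>nu n (ball x (real g)) - Qc i g\<bar> \<le> e i p"
    unfolding n_def x_def g_def by (rule bnd[OF i]) simp
  moreover have "Qc i g \<le> Mc i" using prof_le[of i p g] i by auto
  ultimately show "nu n (ball x (real g)) \<le> Mc i + e i p" by linarith
qed

lemma e4: "4 * e i p = 1 / 2 ^ (p + i)"
  unfolding e_def by (simp add: power_add)

lemma annulus:
  assumes i: "i \<in> {1..a p}"
  shows "emeasure (\<mu> (jj p)) (ball (Xc i (jj p)) (real (G i p)) - ball (Xc i (jj p)) (\<phi> (real (G i p))))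
           \<le> ennreal (1 / 2 ^ (p + i))"
proof -
  let ?x = "Xc i (jj p)" and ?g = "real (G i p)" and ?n = "jj p"
  have N: "N0 \<le> ?n" by (rule jj_N0)
  note E = est[OF i]
  have sub: "ball ?x (\<phi> ?g) \<subseteq> ball ?x ?g" using E(5) by auto
  have "nu ?n (ball ?x ?g - ball ?x (\<phi> ?g)) = nu ?n (ball ?x ?g) - nu ?n (ball ?x (\<phi> ?g))"
    by (rule finite_measure.finite_measure_Diff[OF finite_mu[OF N]]) (auto simp: sets_mu[OF N] sub)
  also have "\<dots> \<le> 3 * e i p" using E(1,3) by linarith
  also have "\<dots> \<le> 1 / 2 ^ (p + i)" using e4[of i p] e_pos[of i p] by linarith
  finally show ?thesis using emeasure_nu[OF N] by (simp add: ennreal_leI)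
qed

lemma e_lim: "(\<lambda>p. e i p) \<longlonglongrightarrow> 0"
proof -
  have "(\<lambda>p. e i p) = (\<lambda>p. (1/2) ^ p * (1 / 2 ^ (i + 2)))"
    by (simp add: e_def power_add power_divide fun_eq_iff)
  moreover have "(\<lambda>p. (1/2::real) ^ p * (1 / 2 ^ (i + 2))) \<longlonglongrightarrow> 0 * (1 / 2 ^ (i + 2))"
    by (intro tendsto_intros LIMSEQ_power_zero) simp
  ultimately show ?thesis by simp
qed

lemma mass_conv:
  assumes v: "valid i"
  shows "(\<lambda>p. emeasure (\<mu> (jj p)) (ball (Xc i (jj p)) (\<phi> (real (G i p))))) \<longlonglongrightarrow> ennreal (Mc i)"
proof -
  from v obtain p0 where p0: "1 \<le> i" "i \<le> a p0" unfolding valid_def by blast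
  have act: "eventually (\<lambda>p. i \<in> {1..a p}) sequentially"
    unfolding eventually_sequentially using p0 active_later by auto
  have lo: "eventually (\<lambda>p. Mc i - 2 * e i p \<le> nu (jj p) (ball (Xc i (jj p)) (\<phi> (real (G i p))))) sequentially"
    using act by eventually_elim (rule est(1))
  have up: "eventually (\<lambda>p. nu (jj p) (ball (Xc i (jj p)) (\<phi> (real (G i p)))) \<le> Mc i + e i p) sequentially"
    using act by eventually_elim (use est(2,3) in fastforce)
  have l1: "(\<lambda>p. Mc i - 2 * e i p) \<longlonglongrightarrow> Mc i - 2 * 0" by (intro tendsto_intros e_lim)
  have l2: "(\<lambda>p. Mc i + e i p) \<longlonglongrightarrow> Mc i + 0" by (intro tendsto_intros e_lim)
  have "(\<lambda>p. nu (jj p) (ball (Xc i (jj p)) (\<phi> (real (G i p))))) \<longlonglongrightarrow> Mc i"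
    using tendsto_sandwich[OF lo up] l1 l2 by simp
  then have "(\<lambda>p. ennreal (nu (jj p) (ball (Xc i (jj p)) (\<phi> (real (G i p)))))) \<longlonglongrightarrow> ennreal (Mc i)"
    by (rule tendsto_ennrealI)
  then show ?thesis using emeasure_nu[OF jj_N0] by simp
qed

lemma conc:
  assumes v: "valid i" and p0: "\<And>p. p0 \<le> p \<Longrightarrow> i \<le> a p"
  shows "concentrates_from p0 (\<lambda>p. restr (\<mu> (jj p)) (ball (Xc i (jj p)) (real (G i p)))) (\<lambda>p. Xc i (jj p))"
  unfolding concentrates_from_def
proof (intro allI impI)
  fix \<epsilon> :: real assume eps: "0 < \<epsilon>"
  have i1: "1 \<le> i" using v valid_def by blast
  obtain pa where pa: "i \<le> a pa" using v valid_def by blast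
  have "eventually (\<lambda>R. dist (Qc i R) (Mc i) < \<epsilon>/2) sequentially"
    by (rule tendstoD[OF prof_lim[OF i1 pa]]) (use eps in simp)
  then obtain R0 where R0: "dist (Qc i R0) (Mc i) < \<epsilon>/2" unfolding eventually_sequentially by blast
  have "eventually (\<lambda>p. dist (e i p) 0 < \<epsilon>/4) sequentially"
    by (rule tendstoD[OF e_lim]) (use eps in simp)
  then obtain P1 where P1': "\<And>p. p \<ge> P1 \<Longrightarrow> dist (e i p) 0 < \<epsilon>/4"
    unfolding eventually_sequentially by blast
  have P1: "e i p < \<epsilon>/4" if "p \<ge> P1" for p
    using P1'[OF that] e_pos[of i p] by (simp add: dist_real_def)
  define P where "P = max P1 p0"
  define Rn where "Rn = max (max R0 (G i P)) 1"
  show "\<exists>R>0. \<forall>p\<ge>p0. emeasure (restr (\<mu> (jj p)) (ball (Xc i (jj p)) (real (G i p)))) (UNIV - ball (Xc i (jj p)) R) < ennreal \<epsilon>"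
  proof (intro exI[of _ "real Rn"] conjI allI impI)
    show "0 < real Rn" unfolding Rn_def by simp
    fix p assume pp0: "p0 \<le> p"
    let ?x = "Xc i (jj p)" and ?g = "real (G i p)" and ?n = "jj p"
    have N: "N0 \<le> ?n" by (rule jj_N0)
    have "emeasure (restr (\<mu> ?n) (ball ?x ?g)) (UNIV - ball ?x (real Rn)) = emeasure (\<mu> ?n) (ball ?x ?g \<inter> (UNIV - ball ?x (real Rn)))"
      by (rule emeasure_restr) (auto simp: sets_mu[OF N])
    also have "\<dots> = ennreal (nu ?n (ball ?x ?g - ball ?x (real Rn)))"
      using emeasure_nu[OF N] by (simp add: Diff_eq)
    also have "\<dots> < ennreal \<epsilon>"
    proof (cases "G i p \<le> Rn")
      case True
      then have emp: "ball ?x ?g - ball ?x (real Rn) = {}" by auto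
      have "nu ?n (ball ?x ?g - ball ?x (real Rn)) = 0" unfolding emp by simp
      then show ?thesis using eps by simp
    next
      case False
      then have "P < p" using G_mono[OF v, of p P] unfolding Rn_def by fastforce
      then have act: "i \<in> {1..a p}" using p0[of p] i1 unfolding P_def by auto
      have sub: "ball ?x (real Rn) \<subseteq> ball ?x ?g" using False by auto
      have "nu ?n (ball ?x ?g - ball ?x (real Rn)) = nu ?n (ball ?x ?g) - nu ?n (ball ?x (real Rn))"
        by (rule finite_measure.finite_measure_Diff[OF finite_mu[OF N]]) (auto simp: sets_mu[OF N] sub)
      moreover have "nu ?n (ball ?x ?g) \<le> Mc i + e i p" using est(3)[OF act] by simp
      moreover have "Qc i Rn - e i p \<le> nu ?n (ball ?x (real Rn))"
      proof -
        have "\<bar>nu ?n (ball ?x (real Rn)) - Qc i Rn\<bar> \<le> e i p"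
          by (rule bnd[OF act]) (use False in simp)
        then show ?thesis by (simp add: abs_le_iff)
      qed
      moreover have "Qc i R0 \<le> Qc i Rn" by (rule Qc_mono[OF act]) (simp add: Rn_def)
      moreover have "e i p < \<epsilon>/4" using \<open>P < p\<close> P1 unfolding P_def by simp
      moreover have "Mc i - Qc i R0 < \<epsilon>/2" using R0 unfolding dist_real_def by (smt (verit) abs_le_iff)
      ultimately have "nu ?n (ball ?x ?g - ball ?x (real Rn)) < \<epsilon>"
        by linarith
      then show ?thesis using eps by (simp add: ennreal_lessI)
    qed
    finally show "emeasure (restr (\<mu> ?n) (ball ?x ?g)) (UNIV - ball ?x (real Rn)) < ennreal \<epsilon>" .
  qed
qed

end



context S2 begin

lemma remainder:
  assumes l0: "l \<le> a p0"
  shows "limsup (\<lambda>p. conc_fun (restr (\<mu> (jj p)) (UNIV - (\<Union>i\<in>{1..l}. ball (Xc i (jj p)) (real (G i p))))) t)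
           \<le> ennreal (D (Sq l) Xc l)"
proof -
  define Dst where "Dst = D (Sq l) Xc l"
  have Dst0: "0 \<le> Dst" unfolding Dst_def by (rule D_nonneg[OF Sq_sub])
  define Rem where "Rem p = UNIV - (\<Union>i\<in>{1..l}. ball (Xc i (jj p)) (real (G i p)))" for p
  have Rem_b: "Rem p \<in> sets borel" for p unfolding Rem_def by auto
  define h where "h p = conc_fun (restr (\<mu> (jj p)) (Rem p)) t" for p
  have h_eq: "h p = (SUP x. ennreal (nu (jj p) (Rem p \<inter> ball x t)))" for p
    unfolding h_def by (rule conc_fun_restr[OF jj_N0 Rem_b])
  have "limsup h \<le> ennreal Dst"
    unfolding Limsup_le_iff
  proof (intro allI impI)
    fix y assume y: "ennreal Dst < y"
    show "eventually (\<lambda>p. h p < y) sequentially"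
    proof (rule ccontr)
      assume ne: "\<not> eventually (\<lambda>p. h p < y) sequentially"
      obtain c where c: "ennreal Dst < c" "c < y" using dense[OF y] by blast
      have "c \<noteq> top" using c(2) by auto
      define b where "b = enn2real c"
      have cb: "c = ennreal b" unfolding b_def using \<open>c \<noteq> top\<close> by (metis ennreal_enn2real less_top)
      have b0: "0 \<le> b" unfolding b_def by simp
      have Db: "Dst < b" using c(1) cb Dst0 by (simp add: ennreal_less_iff)
      have freq: "\<forall>N. \<exists>p\<ge>N. y \<le> h p"
        using ne unfolding not_eventually frequently_sequentially by (simp add: not_less)
      define P0 where "P0 = {p. p0 \<le> p \<and> ennreal b < h p}"
      have P0inf: "infinite P0"
        unfolding infinite_nat_iff_unbounded_le
      proof
        fix m obtain p where "max m p0 \<le> p" "y \<le> h p" using freq by blast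
        then show "\<exists>p\<ge>m. p \<in> P0" using c(2) cb unfolding P0_def by (intro exI[of _ p]) auto
      qed
      have exy: "\<exists>x. ennreal b < ennreal (nu (jj p) (Rem p \<inter> ball x t))" if "p \<in> P0" for p
        using that unfolding P0_def h_eq by (simp add: less_SUP_iff)
      define yp where "yp p = (SOME x. ennreal b < ennreal (nu (jj p) (Rem p \<inter> ball x t)))" for p
      have yp: "b < nu (jj p) (Rem p \<inter> ball (yp p) t)" if "p \<in> P0" for p
      proof -
        have "ennreal b < ennreal (nu (jj p) (Rem p \<inter> ball (yp p) t))"
          unfolding yp_def by (rule someI_ex[OF exy[OF that]])
        then show ?thesis using b0 by (simp add: ennreal_less_iff)
      qed
      have injj: "inj jj" using strict_mono_imp_inj_on[OF jj_mono] .
      define Y where "Y n = yp (inv jj n)" for n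
      have Yjj: "Y (jj p) = yp p" for p unfolding Y_def using inv_f_f[OF injj] by simp
      define T0 where "T0 = jj ` P0"
      have T0inf: "infinite T0" unfolding T0_def using P0inf injj
        by (metis finite_imageD inj_on_subset subset_UNIV)
      have T0sub: "T0 \<subseteq> Sq l" unfolding T0_def P0_def
        using jj_in active_later[OF l0] by auto
      obtain T1 where T1: "T1 \<subseteq> T0" "infinite T1"
        and dich: "\<forall>i\<in>{1..l}. (\<exists>K. \<forall>n\<in>T1. dist (Y n) (Xc i n) \<le> K)
                       \<or> filterlim (\<lambda>n. dist (Y n) (Xc i n)) at_top (along T1)"
        using refine_finite[of "{1..l}" T0 "\<lambda>i n. dist (Y n) (Xc i n)"] T0inf by auto
      have bigP: "infinite {p\<in>P0. jj p \<in> T1}"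
      proof
        assume fin: "finite {p\<in>P0. jj p \<in> T1}"
        have "T1 \<subseteq> jj ` {p\<in>P0. jj p \<in> T1}" using T1(1) unfolding T0_def by auto
        then have "finite T1" using fin finite_subset by blast
        with T1(2) show False by simp
      qed
      show False
      proof (cases "\<exists>i\<in>{1..l}. \<exists>K. \<forall>n\<in>T1. dist (Y n) (Xc i n) \<le> K")
        case True
        then obtain i K where i: "i \<in> {1..l}" and K: "\<forall>n\<in>T1. dist (Y n) (Xc i n) \<le> K" by blast
        have v: "valid i" unfolding valid_def using i l0 le_trans by (auto intro!: exI[of _ p0])
        obtain p where p: "p \<in> P0" "jj p \<in> T1" "nat \<lceil>K + t\<rceil> \<le> p"
          using bigP unfolding infinite_nat_iff_unbounded_le by blast
        have "p < G i p" using G_prop[OF v] by blast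
        then have Kt: "K + t \<le> real (G i p)" using p(3) by linarith
        have dK: "dist (yp p) (Xc i (jj p)) \<le> K" using K p(2) Yjj by metis
        have "ball (yp p) t \<subseteq> ball (Xc i (jj p)) (real (G i p))"
        proof
          fix z assume "z \<in> ball (yp p) t"
          then have "dist (yp p) z < t" by simp
          moreover have "dist (Xc i (jj p)) z \<le> dist (Xc i (jj p)) (yp p) + dist (yp p) z"
            by (rule dist_triangle)
          moreover have "dist (Xc i (jj p)) (yp p) = dist (yp p) (Xc i (jj p))" by (rule dist_commute)
          ultimately show "z \<in> ball (Xc i (jj p)) (real (G i p))" using dK Kt by simp
        qed
        then have "Rem p \<inter> ball (yp p) t = {}" unfolding Rem_def using i by auto
        then have "nu (jj p) (Rem p \<inter> ball (yp p) t) = 0" by simp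
        with yp[OF p(1)] b0 show False by simp
      next
        case False
        with dich have div: "\<forall>i\<in>{1..l}. filterlim (\<lambda>n. dist (Y n) (Xc i n)) at_top (along T1)" by blast
        have "\<exists>T'\<subseteq>T1. infinite T' \<and> (\<forall>R::nat. \<exists>L. ((\<lambda>n. nu n (ball (Y n) t)) \<longlongrightarrow> L) (along T'))"
        proof (rule diag_lemma[OF T1(2)])
          fix R :: nat and n assume "n \<in> T1"
          then have "N0 \<le> n" using T1 T0sub Sq_sub by blast
          then show "\<bar>nu n (ball (Y n) t)\<bar> \<le> C" using nu_le_C by simp
        qed
        then obtain T2 vv where T2: "T2 \<subseteq> T1" "infinite T2"
          and lim: "((\<lambda>n. nu n (ball (Y n) t)) \<longlongrightarrow> vv) (along T2)" by blast
        have "vv \<in> V (Sq l) Xc l"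
          unfolding V_def
        proof (intro CollectI exI conjI)
          show "T2 \<subseteq> Sq l" using T2 T1 T0sub by blast
          show "infinite T2" by (rule T2(2))
          show "\<forall>i\<in>{1..l}. filterlim (\<lambda>n. dist (Y n) (Xc i n)) at_top (along T2)"
            using div filterlim_mono[OF _ order_refl along_mono[OF T2(1)]] by blast
          show "((\<lambda>n. nu n (ball (Y n) t)) \<longlongrightarrow> vv) (along T2)" by (rule lim)
        qed
        then have vD: "vv \<le> Dst" unfolding Dst_def by (rule V_le_D[OF Sq_sub])
        have ev: "eventually (\<lambda>n. b \<le> nu n (ball (Y n) t)) (along T2)"
          unfolding eventually_along
        proof (intro exI allI impI)
          fix n assume "n \<in> T2"
          then obtain p where p: "p \<in> P0" "n = jj p" using T2 T1 unfolding T0_def by blast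
          have N: "N0 \<le> n" using p jj_N0 by simp
          have "nu n (Rem p \<inter> ball (Y n) t) \<le> nu n (ball (Y n) t)"
            by (rule nu_mono[OF N]) (auto simp: Rem_b)
          moreover have "b < nu n (Rem p \<inter> ball (Y n) t)" using yp[OF p(1)] p(2) Yjj by simp
          ultimately show "b \<le> nu n (ball (Y n) t)" by simp
        qed
        have "b \<le> vv" by (rule tendsto_lowerbound[OF lim ev along_nonbot[OF T2(2)]])
        with vD Db show False by simp
      qed
    qed
  qed
  then show ?thesis unfolding h_def Rem_def Dst_def .
qed

end



lemma limsup_zero:
  fixes f :: "nat \<Rightarrow> ennreal"
  assumes "limsup f \<le> 0"
  shows "f \<longlonglongrightarrow> 0"
proof (rule order_tendstoI)
  fix a :: ennreal assume "a < 0" then show "eventually (\<lambda>x. a < f x) sequentially" by simp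
next
  fix a :: ennreal assume "0 < a"
  then show "eventually (\<lambda>x. f x < a) sequentially"
    using assms unfolding Limsup_le_iff by blast
qed

lemma mono_tendsto_SUP:
  fixes f :: "real \<Rightarrow> ennreal"
  assumes "mono f"
  shows "(f \<longlongrightarrow> (SUP t. f t)) at_top"
proof (rule order_tendstoI)
  fix a assume "a < (SUP t. f t)"
  then obtain t0 where "a < f t0" by (auto simp: less_SUP_iff)
  then show "eventually (\<lambda>x. a < f x) at_top"
    unfolding eventually_at_top_linorder using assms
    by (intro exI[of _ t0]) (auto dest: monoD intro: less_le_trans)
next
  fix a assume "(SUP t. f t) < a"
  then show "eventually (\<lambda>x. f x < a) at_top"
    by (intro always_eventually allI) (meson SUP_upper UNIV_I le_less_trans)
qed

context L begin

lemma conc_mono_t: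
  assumes "N0 \<le> n" "A \<in> sets borel" "t \<le> t'"
  shows "conc_fun (restr (\<mu> n) A) t \<le> conc_fun (restr (\<mu> n) A) t'"
  unfolding conc_fun_restr[OF assms(1,2)]
proof (rule SUP_mono)
  fix x show "\<exists>y\<in>UNIV. ennreal (nu n (A \<inter> ball x t)) \<le> ennreal (nu n (A \<inter> ball y t'))"
    using assms by (intro bexI[of _ x] ennreal_leI nu_mono) auto
qed

lemma conc_mono_A:
  assumes "N0 \<le> n" "B \<in> sets borel" "A \<subseteq> B" "A \<in> sets borel"
  shows "conc_fun (restr (\<mu> n) A) t \<le> conc_fun (restr (\<mu> n) B) t"
  unfolding conc_fun_restr[OF assms(1,2)] conc_fun_restr[OF assms(1,4)]
proof (rule SUP_mono)
  fix x show "\<exists>y\<in>UNIV. ennreal (nu n (A \<inter> ball x t)) \<le> ennreal (nu n (B \<inter> ball y t))"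
    using assms by (intro bexI[of _ x] ennreal_leI nu_mono) auto
qed

lemma nonvan:
  assumes "\<not> vanishing \<mu>"
  shows "0 < D {N0..} X 0"
proof -
  from assms obtain r where r: "0 < r" and nt: "\<not> (\<lambda>n. conc_fun (\<mu> n) r) \<longlonglongrightarrow> 0"
    unfolding vanishing_def by blast
  have "\<exists>e>0. \<not> eventually (\<lambda>n. conc_fun (\<mu> n) r < e) sequentially"
  proof (rule ccontr)
    assume "\<not> ?thesis"
    then have "\<forall>e>0. eventually (\<lambda>n. conc_fun (\<mu> n) r < e) sequentially" by blast
    then have "(\<lambda>n. conc_fun (\<mu> n) r) \<longlonglongrightarrow> 0"
      by (intro order_tendstoI) auto
    with nt show False by simp
  qed
  then obtain e :: ennreal where e: "0 < e" "\<not> eventually (\<lambda>n. conc_fun (\<mu> n) r < e) sequentially" by blast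
  obtain c where c: "0 < c" "c < e" using dense[OF e(1)] by blast
  have "c \<noteq> top" using c(2) by auto
  define d where "d = enn2real c"
  have cd: "c = ennreal d" unfolding d_def using \<open>c \<noteq> top\<close> by (metis ennreal_enn2real less_top)
  have d0: "0 < d" using c(1) cd by (simp add: ennreal_less_iff)
  have freq: "\<forall>N. \<exists>n\<ge>N. e \<le> conc_fun (\<mu> n) r"
    using e(2) unfolding not_eventually frequently_sequentially by (simp add: not_less)
  define P0 where "P0 = {n. N0 \<le> n \<and> ennreal d < conc_fun (\<mu> n) r}"
  have P0inf: "infinite P0"
    unfolding infinite_nat_iff_unbounded_le
  proof
    fix m obtain n where "max m N0 \<le> n" "e \<le> conc_fun (\<mu> n) r" using freq by blast
    then show "\<exists>n\<ge>m. n \<in> P0" using c(2) cd unfolding P0_def by (intro exI[of _ n]) auto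
  qed
  have exy: "\<exists>x. ennreal d < ennreal (nu n (ball x r))" if "n \<in> P0" for n
  proof -
    from that have N: "N0 \<le> n" and "\<exists>x. ennreal d < emeasure (\<mu> n) (ball x r)"
      unfolding P0_def conc_fun_def by (auto simp: less_SUP_iff)
    then show ?thesis using emeasure_nu[OF N] by simp
  qed
  define Y where "Y n = (SOME x. ennreal d < ennreal (nu n (ball x r)))" for n
  have Y: "d < nu n (ball (Y n) r)" if "n \<in> P0" for n
  proof -
    have "ennreal d < ennreal (nu n (ball (Y n) r))" unfolding Y_def by (rule someI_ex[OF exy[OF that]])
    then show ?thesis using d0 by (simp add: ennreal_less_iff)
  qed
  have "\<exists>T\<subseteq>P0. infinite T \<and> (\<forall>R::nat. \<exists>L. ((\<lambda>n. nu n (ball (Y n) r)) \<longlongrightarrow> L) (along T))"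
  proof (rule diag_lemma[OF P0inf])
    fix R :: nat and n assume "n \<in> P0"
    then have "N0 \<le> n" unfolding P0_def by simp
    then show "\<bar>nu n (ball (Y n) r)\<bar> \<le> C" using nu_le_C by simp
  qed
  then obtain T v where T: "T \<subseteq> P0" "infinite T" and lim: "((\<lambda>n. nu n (ball (Y n) r)) \<longlongrightarrow> v) (along T)"
    by blast
  have TN: "{N0..} \<supseteq> T" using T unfolding P0_def by auto
  have "v \<in> V {N0..} X 0" unfolding V_def using T TN lim by auto
  then have vD: "v \<le> D {N0..} X 0" by (rule V_le_D[OF order_refl])
  have ev: "eventually (\<lambda>n. d \<le> nu n (ball (Y n) r)) (along T)"
    unfolding eventually_along using T Y by (auto intro: less_imp_le)
  have "d \<le> v" by (rule tendsto_lowerbound[OF lim ev along_nonbot[OF T(2)]])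
  with vD d0 show ?thesis by simp
qed

end

context S2 begin

lemma mass_conv_real:
  assumes v: "valid i"
  shows "(\<lambda>p. nu (jj p) (ball (Xc i (jj p)) (\<phi> (real (G i p))))) \<longlonglongrightarrow> Mc i"
proof -
  from v obtain p0 where p0: "1 \<le> i" "i \<le> a p0" unfolding valid_def by blast
  have act: "eventually (\<lambda>p. i \<in> {1..a p}) sequentially"
    unfolding eventually_sequentially using p0 active_later by auto
  have lo: "eventually (\<lambda>p. Mc i - 2 * e i p \<le> nu (jj p) (ball (Xc i (jj p)) (\<phi> (real (G i p))))) sequentially"
    using act by eventually_elim (rule est(1))
  have up: "eventually (\<lambda>p. nu (jj p) (ball (Xc i (jj p)) (\<phi> (real (G i p)))) \<le> Mc i + e i p) sequentially"
    using act by eventually_elim (use est(2,3) in fastforce)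
  have l1: "(\<lambda>p. Mc i - 2 * e i p) \<longlonglongrightarrow> Mc i - 2 * 0" by (intro tendsto_intros e_lim)
  have l2: "(\<lambda>p. Mc i + e i p) \<longlonglongrightarrow> Mc i + 0" by (intro tendsto_intros e_lim)
  show ?thesis
    using tendsto_sandwich[OF lo up] l1 l2 by simp
qed

lemma sum_M_le_C:
  assumes K: "K \<le> a p0"
  shows "(\<Sum>i\<in>{1..K}. Mc i) \<le> C"
proof -
  have val: "valid i" if "i \<in> {1..K}" for i
    unfolding valid_def using that K by (auto intro!: exI[of _ p0])
  have lim: "(\<lambda>p. \<Sum>i\<in>{1..K}. nu (jj p) (ball (Xc i (jj p)) (\<phi> (real (G i p))))) \<longlonglongrightarrow> (\<Sum>i\<in>{1..K}. Mc i)"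
    by (intro tendsto_sum mass_conv_real val)
  have bnd: "(\<Sum>i\<in>{1..K}. nu (jj p) (ball (Xc i (jj p)) (\<phi> (real (G i p))))) \<le> C" if "p0 \<le> p" for p
  proof -
    have Kp: "K \<le> a p" using active_later[OF K that] .
    have N: "N0 \<le> jj p" by (rule jj_N0)
    have dj: "disjoint_family_on (\<lambda>i. ball (Xc i (jj p)) (\<phi> (real (G i p)))) {1..K}"
      unfolding disjoint_family_on_def
    proof (intro ballI impI)
      fix i i' assume ii: "i \<in> {1..K}" "i' \<in> {1..K}" "i \<noteq> i'"
      have "ball (Xc i (jj p)) (real (G i p)) \<inter> ball (Xc i' (jj p)) (real (G i' p)) = {}"
        using disj[of p] ii Kp unfolding disjoint_family_on_def by auto
      moreover have "ball (Xc i (jj p)) (\<phi> (real (G i p))) \<subseteq> ball (Xc i (jj p)) (real (G i p))"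
        using est(5)[of i p] ii Kp by auto
      moreover have "ball (Xc i' (jj p)) (\<phi> (real (G i' p))) \<subseteq> ball (Xc i' (jj p)) (real (G i' p))"
        using est(5)[of i' p] ii Kp by auto
      ultimately show "ball (Xc i (jj p)) (\<phi> (real (G i p))) \<inter> ball (Xc i' (jj p)) (\<phi> (real (G i' p))) = {}"
        by blast
    qed
    have "(\<Sum>i\<in>{1..K}. nu (jj p) (ball (Xc i (jj p)) (\<phi> (real (G i p)))))
        = nu (jj p) (\<Union>i\<in>{1..K}. ball (Xc i (jj p)) (\<phi> (real (G i p))))"
      by (rule measure_finite_Union[symmetric]) (use dj emeasure_nu[OF N] sets_mu[OF N] in auto)
    also have "\<dots> \<le> C" by (rule nu_le_C[OF N])
    finally show ?thesis .
  qed
  show ?thesis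
    by (rule LIMSEQ_le_const2[OF lim]) (use bnd in blast)
qed

end



context L begin

lemma SS0: "SS 0 = {N0..}" by (simp add: SS_def)

lemma Dl0: "\<not> vanishing \<mu> \<Longrightarrow> 0 < Dl 0"
  unfolding Dl_def SS0 by (rule nonvan)

lemma prof_facts:
  assumes D: "0 < Dl (i - 1)" and i: "1 \<le> i"
  shows "\<forall>R::nat. ((\<lambda>n. nu n (ball (Xf i n) (real R))) \<longlongrightarrow> Qf i R) (along (SS i))"
    and "incseq (Qf i)" and "Qf i \<longlonglongrightarrow> Mf i" and "\<forall>R. Qf i R \<le> Mf i" and "0 < Mf i"
    and "\<forall>i'\<in>{1..i-1}. filterlim (\<lambda>n. dist (Xf i n) (Xf i' n)) at_top (along (SS i))"
    and "Dl (i - 1) < 2 * Mf i" and "Mf i \<le> Dl (i - 1)"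
proof -
  have si: "Suc (i - 1) = i" using i by simp
  have "step_ok (SS (i-1)) Xf (i-1) (SS i) (Xf i) (Qf i) (Mf i)"
    using step_Dl[OF D] unfolding si .
  then show "\<forall>R::nat. ((\<lambda>n. nu n (ball (Xf i n) (real R))) \<longlongrightarrow> Qf i R) (along (SS i))"
    and "incseq (Qf i)" and "Qf i \<longlonglongrightarrow> Mf i" and "\<forall>R. Qf i R \<le> Mf i" and "0 < Mf i"
    and "\<forall>i'\<in>{1..i-1}. filterlim (\<lambda>n. dist (Xf i n) (Xf i' n)) at_top (along (SS i))"
    and "Dl (i - 1) < 2 * Mf i" and "Mf i \<le> Dl (i - 1)"
    unfolding step_ok_def Dl_def by auto
qed

lemma mk_S2:
  assumes am: "mono a" and pos: "\<And>i p. 1 \<le> i \<Longrightarrow> i \<le> a p \<Longrightarrow> 0 < Dl (i - 1)"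
  shows "S2 \<mu> \<phi> N0 C a SS Xf Qf Mf"
proof (rule S2.intro[OF L_axioms], rule S2_axioms.intro)
  show "mono a" by (rule am)
  show "\<And>i. SS i \<subseteq> {N0..}" by (rule SS_sub)
  show "\<And>i. infinite (SS i)" by (rule SS_inf)
  show "\<And>i i'. i \<le> i' \<Longrightarrow> SS i' \<subseteq> SS i" by (rule SS_dec)
  show "\<And>i p R. 1 \<le> i \<Longrightarrow> i \<le> a p \<Longrightarrow> ((\<lambda>n. nu n (ball (Xf i n) (real R))) \<longlongrightarrow> Qf i R) (along (SS i))"
    using prof_facts(1)[OF pos] by blast
  show "\<And>i p. 1 \<le> i \<Longrightarrow> i \<le> a p \<Longrightarrow> Qf i \<longlonglongrightarrow> Mf i"
    using prof_facts(3)[OF pos] by blast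
  show "\<And>i p. 1 \<le> i \<Longrightarrow> i \<le> a p \<Longrightarrow> incseq (Qf i)"
    using prof_facts(2)[OF pos] by blast
  show "\<And>i p R. 1 \<le> i \<Longrightarrow> i \<le> a p \<Longrightarrow> Qf i R \<le> Mf i"
    using prof_facts(4)[OF pos] by blast
  show "\<And>i p. 1 \<le> i \<Longrightarrow> i \<le> a p \<Longrightarrow> 0 < Mf i"
    using prof_facts(5)[OF pos] by blast
  show "\<And>i p i'. 1 \<le> i \<Longrightarrow> i \<le> a p \<Longrightarrow> 1 \<le> i' \<Longrightarrow> i' < i \<Longrightarrow>
        filterlim (\<lambda>n. dist (Xf i n) (Xf i' n)) at_top (along (SS i))"
  proof -
    fix i p i' assume "1 \<le> i" "i \<le> a p" "1 \<le> i'" "i' < i"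
    then show "filterlim (\<lambda>n. dist (Xf i n) (Xf i' n)) at_top (along (SS i))"
      using prof_facts(6)[OF pos[of i p]] by auto
  qed
qed

lemma Dl_lim:
  assumes pos: "\<And>l. 0 < Dl l" and sumC: "\<And>K. (\<Sum>i\<in>{1..K}. Mf i) \<le> C"
  shows "Dl \<longlonglongrightarrow> 0"
proof (rule order_tendstoI)
  fix a :: real assume "a < 0"
  have "a < Dl l" for l using Dl_nonneg[of l] \<open>a < 0\<close> by linarith
  then show "eventually (\<lambda>l. a < Dl l) sequentially" by simp
next
  fix \<epsilon> :: real assume eps: "0 < \<epsilon>"
  have "\<exists>l. Dl l < \<epsilon>"
  proof (rule ccontr)
    assume "\<not> ?thesis"
    then have ge: "\<epsilon> \<le> Dl l" for l by (simp add: not_less)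
    have Mge: "\<epsilon> / 2 \<le> Mf i" if "i \<in> {1..K}" for i K
      using prof_facts(7)[OF pos, of i] ge[of "i - 1"] that by simp
    define K where "K = Suc (nat \<lceil>2 * C / \<epsilon>\<rceil>)"
    have "(\<Sum>i\<in>{1..K}. \<epsilon> / 2) \<le> (\<Sum>i\<in>{1..K}. Mf i)" by (rule sum_mono) (rule Mge)
    then have "real K * (\<epsilon> / 2) \<le> C" using sumC[of K] by simp
    moreover have "2 * C / \<epsilon> < real K" unfolding K_def by linarith
    then have "C < real K * (\<epsilon> / 2)" using eps by (simp add: field_simps)
    ultimately show False by simp
  qed
  then obtain l0 where l0: "Dl l0 < \<epsilon>" by blast
  show "eventually (\<lambda>l. Dl l < \<epsilon>) sequentially"
    unfolding eventually_sequentially using Dl_dec l0 by (intro exI[of _ l0]) (auto intro: le_less_trans)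
qed

end



context L begin

lemma Rem_borel: "(UNIV - (\<Union>i\<in>{1..l}. ball (X i) (r i))) \<in> sets borel"
  by (intro borel_closed closed_Diff closed_UNIV open_UN ballI open_ball)

lemma sm_on: "strict_mono j \<Longrightarrow> strict_mono_on {1..} j"
  by (simp add: strict_mono_def strict_mono_on_def)

lemma main_L:
  assumes nv: "\<not> vanishing \<mu>"
  shows "\<exists>j::nat \<Rightarrow> nat. strict_mono_on {1..} j \<and> (\<forall>n\<ge>1. j n \<ge> 1) \<and>
      ((\<exists>k::nat. \<exists>m::nat \<Rightarrow> real. \<exists>x::nat \<Rightarrow> nat \<Rightarrow> 'a. \<exists>r::nat \<Rightarrow> nat \<Rightarrow> real.
          k \<ge> 1 \<and>
          (\<forall>i\<in>{1..k}. m i > 0 \<and> (\<forall>n\<ge>1. r i n > 0) \<and> mono_on {1..} (r i)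
             \<and> filterlim (r i) at_top sequentially) \<and>
          (\<forall>n\<ge>1. disjoint_family_on (\<lambda>i. ball (x i n) (r i n)) {1..k}) \<and>
          (\<forall>i\<in>{1..k}.
             (\<lambda>n. emeasure (\<mu> (j n)) (ball (x i n) (\<phi> (r i n)))) \<longlonglongrightarrow> ennreal (m i) \<and>
             (\<forall>n\<ge>1. emeasure (\<mu> (j n)) (ball (x i n) (r i n) - ball (x i n) (\<phi> (r i n)))
                        \<le> ennreal (1 / 2 ^ (n + i))) \<and>
             concentrates_from 1 (\<lambda>n. restr (\<mu> (j n)) (ball (x i n) (r i n))) (x i)) \<and>
          vanishing (\<lambda>n. restr (\<mu> (j n)) (UNIV - (\<Union>i\<in>{1..k}. ball (x i n) (r i n)))))
       \<or>
       (\<exists>m::nat \<Rightarrow> real. \<exists>x::nat \<Rightarrow> nat \<Rightarrow> 'a. \<exists>r::nat \<Rightarrow> nat \<Rightarrow> real.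
          (\<forall>i\<ge>1. m i > 0 \<and> m (i + 1) \<le> 2 * m i \<and> (\<forall>n\<ge>i. r i n > 0) \<and> mono_on {i..} (r i)
             \<and> filterlim (r i) at_top sequentially) \<and>
          (\<forall>n\<ge>1. disjoint_family_on (\<lambda>i. ball (x i n) (r i n)) {1..n}) \<and>
          (\<forall>i\<ge>1.
             (\<lambda>n. emeasure (\<mu> (j n)) (ball (x i n) (\<phi> (r i n)))) \<longlonglongrightarrow> ennreal (m i) \<and>
             (\<forall>n\<ge>i. emeasure (\<mu> (j n)) (ball (x i n) (r i n) - ball (x i n) (\<phi> (r i n)))
                        \<le> ennreal (1 / 2 ^ (n + i))) \<and>
             concentrates_from i (\<lambda>n. restr (\<mu> (j n)) (ball (x i n) (r i n))) (x i)) \<and>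
          (\<exists>L::nat \<Rightarrow> ennreal.
             (\<forall>l\<ge>1. ((\<lambda>t. limsup (\<lambda>n. conc_fun
                  (restr (\<mu> (j n)) (UNIV - (\<Union>i\<in>{1..l}. ball (x i n) (r i n)))) t)) \<longlongrightarrow> L l) at_top)
             \<and> L \<longlonglongrightarrow> 0) \<and>
          vanishing (\<lambda>n. restr (\<mu> (j n)) (UNIV - (\<Union>i\<in>{1..n}. ball (x i n) (r i n))))))"
proof (cases "\<exists>k. \<not> 0 < Dl k")
  case True
  define k where "k = (LEAST k. \<not> 0 < Dl k)"
  have k: "\<not> 0 < Dl k" unfolding k_def by (rule LeastI_ex[OF True])
  have kpos: "0 < Dl l" if "l < k" for l using not_less_Least[OF that[unfolded k_def]] by simp
  have k1: "1 \<le> k" using k Dl0[OF nv] by (cases k) auto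
  have Dk0: "Dl k = 0" using k Dl_nonneg[of k] by simp
  interpret s2: S2 \<mu> \<phi> N0 C "\<lambda>_. k" SS Xf Qf Mf
    by (rule mk_S2) (auto simp: mono_def intro!: kpos)
  have val: "s2.valid i" if "i \<in> {1..k}" for i using that unfolding s2.valid_def by auto
  have F1: "strict_mono_on {1..} s2.jj" by (rule sm_on[OF s2.jj_mono])
  have F2: "\<forall>n\<ge>1. 1 \<le> s2.jj n" using s2.jj_N0 N0 le_trans by blast
  have F3: "\<forall>i\<in>{1..k}. 0 < Mf i \<and> (\<forall>n\<ge>1. 0 < real (s2.G i n)) \<and> mono_on {1..} (\<lambda>n. real (s2.G i n))
             \<and> filterlim (\<lambda>n. real (s2.G i n)) at_top sequentially"
  proof
    fix i assume i: "i \<in> {1..k}"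
    show "0 < Mf i \<and> (\<forall>n\<ge>1. 0 < real (s2.G i n)) \<and> mono_on {1..} (\<lambda>n. real (s2.G i n))
             \<and> filterlim (\<lambda>n. real (s2.G i n)) at_top sequentially"
      using s2.prof_pos[of i] i s2.G_pos[OF val[OF i]] mono_imp_mono_on[OF s2.G_mono'[OF val[OF i]]]
        s2.G_lim[OF val[OF i]] by auto
  qed
  have F4: "\<forall>n\<ge>1. disjoint_family_on (\<lambda>i. ball (Xf i (s2.jj n)) (real (s2.G i n))) {1..k}"
    using s2.disj by simp
  have F5: "\<forall>i\<in>{1..k}.
             (\<lambda>n. emeasure (\<mu> (s2.jj n)) (ball (Xf i (s2.jj n)) (\<phi> (real (s2.G i n))))) \<longlonglongrightarrow> ennreal (Mf i) \<and>
             (\<forall>n\<ge>1. emeasure (\<mu> (s2.jj n)) (ball (Xf i (s2.jj n)) (real (s2.G i n)) - ball (Xf i (s2.jj n)) (\<phi> (real (s2.G i n))))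
                        \<le> ennreal (1 / 2 ^ (n + i))) \<and>
             concentrates_from 1 (\<lambda>n. restr (\<mu> (s2.jj n)) (ball (Xf i (s2.jj n)) (real (s2.G i n)))) (\<lambda>n. Xf i (s2.jj n))"
  proof
    fix i assume i: "i \<in> {1..k}"
    have "\<forall>n\<ge>1. emeasure (\<mu> (s2.jj n)) (ball (Xf i (s2.jj n)) (real (s2.G i n)) - ball (Xf i (s2.jj n)) (\<phi> (real (s2.G i n))))
                        \<le> ennreal (1 / 2 ^ (n + i))"
      using s2.annulus i by simp
    moreover have "concentrates_from 1 (\<lambda>n. restr (\<mu> (s2.jj n)) (ball (Xf i (s2.jj n)) (real (s2.G i n)))) (\<lambda>n. Xf i (s2.jj n))"
      by (rule s2.conc[OF val[OF i]]) (use i in simp)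
    ultimately show "(\<lambda>n. emeasure (\<mu> (s2.jj n)) (ball (Xf i (s2.jj n)) (\<phi> (real (s2.G i n))))) \<longlonglongrightarrow> ennreal (Mf i) \<and>
             (\<forall>n\<ge>1. emeasure (\<mu> (s2.jj n)) (ball (Xf i (s2.jj n)) (real (s2.G i n)) - ball (Xf i (s2.jj n)) (\<phi> (real (s2.G i n))))
                        \<le> ennreal (1 / 2 ^ (n + i))) \<and>
             concentrates_from 1 (\<lambda>n. restr (\<mu> (s2.jj n)) (ball (Xf i (s2.jj n)) (real (s2.G i n)))) (\<lambda>n. Xf i (s2.jj n))"
      using s2.mass_conv[OF val[OF i]] by blast
  qed
  have F6: "vanishing (\<lambda>n. restr (\<mu> (s2.jj n)) (UNIV - (\<Union>i\<in>{1..k}. ball (Xf i (s2.jj n)) (real (s2.G i n)))))"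
    unfolding vanishing_def
  proof (intro allI impI)
    fix t :: real assume "0 < t"
    have "limsup (\<lambda>n. conc_fun (restr (\<mu> (s2.jj n)) (UNIV - (\<Union>i\<in>{1..k}. ball (Xf i (s2.jj n)) (real (s2.G i n))))) t)
           \<le> ennreal (D (SS k) Xf k)"
      by (rule s2.remainder[of k]) simp
    then show "(\<lambda>n. conc_fun (restr (\<mu> (s2.jj n)) (UNIV - (\<Union>i\<in>{1..k}. ball (Xf i (s2.jj n)) (real (s2.G i n))))) t) \<longlonglongrightarrow> 0"
      using Dk0 unfolding Dl_def by (intro limsup_zero) simp
  qed
  show ?thesis
    apply (rule exI[of _ s2.jj])
    apply (intro conjI disjI1)
      apply (rule F1)
     apply (rule F2)
    apply (rule exI[of _ k], rule exI[of _ Mf], rule exI[of _ "\<lambda>i n. Xf i (s2.jj n)"],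
        rule exI[of _ "\<lambda>i n. real (s2.G i n)"])
    using k1 F3 F4 F5 F6 by (intro conjI) simp_all
next
  case False
  then have pos: "0 < Dl l" for l by blast
  interpret s2: S2 \<mu> \<phi> N0 C id SS Xf Qf Mf
    by (rule mk_S2) (auto simp: mono_def intro!: pos)
  have val: "s2.valid i" if "1 \<le> i" for i using that unfolding s2.valid_def by auto
  have F1: "strict_mono_on {1..} s2.jj" by (rule sm_on[OF s2.jj_mono])
  have F2: "\<forall>n\<ge>1. 1 \<le> s2.jj n" using s2.jj_N0 N0 le_trans by blast
  have G1: "\<forall>i\<ge>1. 0 < Mf i \<and> Mf (i + 1) \<le> 2 * Mf i \<and> (\<forall>n\<ge>i. 0 < real (s2.G i n)) \<and> mono_on {i..} (\<lambda>n. real (s2.G i n))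
             \<and> filterlim (\<lambda>n. real (s2.G i n)) at_top sequentially"
  proof (intro allI impI)
    fix i :: nat assume i: "1 \<le> i"
    have "Mf (i + 1) \<le> Dl i" using prof_facts(8)[OF pos, of "i + 1"] by simp
    also have "\<dots> \<le> Dl (i - 1)" by (rule Dl_dec) simp
    also have "\<dots> < 2 * Mf i" by (rule prof_facts(7)[OF pos i])
    finally have "Mf (i + 1) \<le> 2 * Mf i" by simp
    then show "0 < Mf i \<and> Mf (i + 1) \<le> 2 * Mf i \<and> (\<forall>n\<ge>i. 0 < real (s2.G i n)) \<and> mono_on {i..} (\<lambda>n. real (s2.G i n))
             \<and> filterlim (\<lambda>n. real (s2.G i n)) at_top sequentially"
      using prof_facts(5)[OF pos i] s2.G_pos[OF val[OF i]] mono_imp_mono_on[OF s2.G_mono'[OF val[OF i]]]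
        s2.G_lim[OF val[OF i]] by auto
  qed
  have G2: "\<forall>n\<ge>1. disjoint_family_on (\<lambda>i. ball (Xf i (s2.jj n)) (real (s2.G i n))) {1..n}"
    using s2.disj by simp
  have G3: "\<forall>i\<ge>1.
             (\<lambda>n. emeasure (\<mu> (s2.jj n)) (ball (Xf i (s2.jj n)) (\<phi> (real (s2.G i n))))) \<longlonglongrightarrow> ennreal (Mf i) \<and>
             (\<forall>n\<ge>i. emeasure (\<mu> (s2.jj n)) (ball (Xf i (s2.jj n)) (real (s2.G i n)) - ball (Xf i (s2.jj n)) (\<phi> (real (s2.G i n))))
                        \<le> ennreal (1 / 2 ^ (n + i))) \<and>
             concentrates_from i (\<lambda>n. restr (\<mu> (s2.jj n)) (ball (Xf i (s2.jj n)) (real (s2.G i n)))) (\<lambda>n. Xf i (s2.jj n))"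
  proof (intro allI impI)
    fix i :: nat assume i: "1 \<le> i"
    have "\<forall>n\<ge>i. emeasure (\<mu> (s2.jj n)) (ball (Xf i (s2.jj n)) (real (s2.G i n)) - ball (Xf i (s2.jj n)) (\<phi> (real (s2.G i n))))
                        \<le> ennreal (1 / 2 ^ (n + i))"
      using s2.annulus i by simp
    moreover have "concentrates_from i (\<lambda>n. restr (\<mu> (s2.jj n)) (ball (Xf i (s2.jj n)) (real (s2.G i n)))) (\<lambda>n. Xf i (s2.jj n))"
      by (rule s2.conc[OF val[OF i]]) simp
    ultimately show "(\<lambda>n. emeasure (\<mu> (s2.jj n)) (ball (Xf i (s2.jj n)) (\<phi> (real (s2.G i n))))) \<longlonglongrightarrow> ennreal (Mf i) \<and>
             (\<forall>n\<ge>i. emeasure (\<mu> (s2.jj n)) (ball (Xf i (s2.jj n)) (real (s2.G i n)) - ball (Xf i (s2.jj n)) (\<phi> (real (s2.G i n))))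
                        \<le> ennreal (1 / 2 ^ (n + i))) \<and>
             concentrates_from i (\<lambda>n. restr (\<mu> (s2.jj n)) (ball (Xf i (s2.jj n)) (real (s2.G i n)))) (\<lambda>n. Xf i (s2.jj n))"
      using s2.mass_conv[OF val[OF i]] by blast
  qed
  define g where "g l t = limsup (\<lambda>n. conc_fun (restr (\<mu> (s2.jj n)) (UNIV - (\<Union>i\<in>{1..l}. ball (Xf i (s2.jj n)) (real (s2.G i n))))) t)" for l t
  define Lf where "Lf l = (SUP t. g l t)" for l
  have gmono: "mono (g l)" for l
    unfolding mono_def g_def
  proof (intro allI impI Limsup_mono always_eventually)
    fix t t' :: real and n assume "t \<le> t'"
    then show "conc_fun (restr (\<mu> (s2.jj n)) (UNIV - (\<Union>i\<in>{1..l}. ball (Xf i (s2.jj n)) (real (s2.G i n))))) t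
       \<le> conc_fun (restr (\<mu> (s2.jj n)) (UNIV - (\<Union>i\<in>{1..l}. ball (Xf i (s2.jj n)) (real (s2.G i n))))) t'"
      by (intro conc_mono_t s2.jj_N0 Rem_borel)
  qed
  have glim: "((\<lambda>t. g l t) \<longlongrightarrow> Lf l) at_top" for l
    unfolding Lf_def using mono_tendsto_SUP[OF gmono[of l]] by simp
  have gD: "g l t \<le> ennreal (Dl l)" for l t
    unfolding g_def Dl_def by (rule s2.remainder[of l l]) simp
  have LD: "Lf l \<le> ennreal (Dl l)" for l unfolding Lf_def by (rule SUP_least) (rule gD)
  have sumC: "(\<Sum>i\<in>{1..K}. Mf i) \<le> C" for K by (rule s2.sum_M_le_C[of K K]) simp
  have Dlim: "Dl \<longlonglongrightarrow> 0" by (rule Dl_lim[OF pos sumC])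
  have Dlim': "(\<lambda>l. ennreal (Dl l)) \<longlonglongrightarrow> 0" using tendsto_ennrealI[OF Dlim] by simp
  have Llim: "Lf \<longlonglongrightarrow> 0"
    by (rule tendsto_sandwich[OF _ _ tendsto_const Dlim']) (use LD in auto)
  have G4: "\<exists>L::nat \<Rightarrow> ennreal.
             (\<forall>l\<ge>1. ((\<lambda>t. limsup (\<lambda>n. conc_fun
                  (restr (\<mu> (s2.jj n)) (UNIV - (\<Union>i\<in>{1..l}. ball (Xf i (s2.jj n)) (real (s2.G i n))))) t)) \<longlongrightarrow> L l) at_top)
             \<and> L \<longlonglongrightarrow> 0"
    using glim Llim unfolding g_def by blast
  have G5: "vanishing (\<lambda>n. restr (\<mu> (s2.jj n)) (UNIV - (\<Union>i\<in>{1..n}. ball (Xf i (s2.jj n)) (real (s2.G i n)))))"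
    unfolding vanishing_def
  proof (intro allI impI)
    fix t :: real assume "0 < t"
    define f where "f n = conc_fun (restr (\<mu> (s2.jj n)) (UNIV - (\<Union>i\<in>{1..n}. ball (Xf i (s2.jj n)) (real (s2.G i n))))) t" for n
    have fl: "limsup f \<le> Lf l" for l
    proof -
      have "limsup f \<le> g l t"
        unfolding g_def f_def
      proof (rule Limsup_mono)
        show "eventually (\<lambda>n. conc_fun (restr (\<mu> (s2.jj n)) (UNIV - (\<Union>i\<in>{1..n}. ball (Xf i (s2.jj n)) (real (s2.G i n))))) t
           \<le> conc_fun (restr (\<mu> (s2.jj n)) (UNIV - (\<Union>i\<in>{1..l}. ball (Xf i (s2.jj n)) (real (s2.G i n))))) t) sequentially"
          unfolding eventually_sequentially
          by (intro exI[of _ l] allI impI conc_mono_A s2.jj_N0 Rem_borel) auto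
      qed
      also have "\<dots> \<le> Lf l" unfolding Lf_def by (rule SUP_upper) simp
      finally show ?thesis .
    qed
    have "limsup f \<le> 0"
      by (rule tendsto_le[OF sequentially_bot Llim tendsto_const]) (use fl in simp)
    then show "(\<lambda>n. conc_fun (restr (\<mu> (s2.jj n)) (UNIV - (\<Union>i\<in>{1..n}. ball (Xf i (s2.jj n)) (real (s2.G i n))))) t) \<longlonglongrightarrow> 0"
      unfolding f_def[symmetric] by (rule limsup_zero)
  qed
  show ?thesis
    apply (rule exI[of _ s2.jj])
    apply (intro conjI disjI2)
      apply (rule F1)
     apply (rule F2)
    apply (rule exI[of _ Mf], rule exI[of _ "\<lambda>i n. Xf i (s2.jj n)"],
        rule exI[of _ "\<lambda>i n. real (s2.G i n)"])
    using G1 G2 G3 G4 G5 by (intro conjI) simp_all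
qed

end


theorem theorem1p5:
  fixes \<mu> :: "nat \<Rightarrow> 'a::metric_space measure"
    and \<phi> :: "real \<Rightarrow> real"
  assumes borel: "\<And>n. n \<ge> 1 \<Longrightarrow> sets (\<mu> n) = sets borel"
    and bounded: "limsup (\<lambda>n. emeasure (\<mu> n) UNIV) < \<infinity>"
    and phi_nonneg: "\<And>s. s \<ge> 0 \<Longrightarrow> \<phi> s \<ge> 0"
    and phi_mono: "mono_on {0..} \<phi>"
    and phi_half: "\<And>s. s \<ge> 0 \<Longrightarrow> \<phi> s \<le> s / 2"
    and phi_lim: "filterlim \<phi> at_top at_top"
  shows "vanishing \<mu> \<or>
    (\<exists>j::nat \<Rightarrow> nat. strict_mono_on {1..} j \<and> (\<forall>n\<ge>1. j n \<ge> 1) \<and>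
      ((\<exists>k::nat. \<exists>m::nat \<Rightarrow> real. \<exists>x::nat \<Rightarrow> nat \<Rightarrow> 'a. \<exists>r::nat \<Rightarrow> nat \<Rightarrow> real.
          k \<ge> 1 \<and>
          (\<forall>i\<in>{1..k}. m i > 0 \<and> (\<forall>n\<ge>1. r i n > 0) \<and> mono_on {1..} (r i)
             \<and> filterlim (r i) at_top sequentially) \<and>
          (\<forall>n\<ge>1. disjoint_family_on (\<lambda>i. ball (x i n) (r i n)) {1..k}) \<and>
          (\<forall>i\<in>{1..k}.
             (\<lambda>n. emeasure (\<mu> (j n)) (ball (x i n) (\<phi> (r i n)))) \<longlonglongrightarrow> ennreal (m i) \<and>
             (\<forall>n\<ge>1. emeasure (\<mu> (j n)) (ball (x i n) (r i n) - ball (x i n) (\<phi> (r i n)))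
                        \<le> ennreal (1 / 2 ^ (n + i))) \<and>
             concentrates_from 1 (\<lambda>n. restr (\<mu> (j n)) (ball (x i n) (r i n))) (x i)) \<and>
          vanishing (\<lambda>n. restr (\<mu> (j n)) (UNIV - (\<Union>i\<in>{1..k}. ball (x i n) (r i n)))))
       \<or>
       (\<exists>m::nat \<Rightarrow> real. \<exists>x::nat \<Rightarrow> nat \<Rightarrow> 'a. \<exists>r::nat \<Rightarrow> nat \<Rightarrow> real.
          (\<forall>i\<ge>1. m i > 0 \<and> m (i + 1) \<le> 2 * m i \<and> (\<forall>n\<ge>i. r i n > 0) \<and> mono_on {i..} (r i)
             \<and> filterlim (r i) at_top sequentially) \<and>
          (\<forall>n\<ge>1. disjoint_family_on (\<lambda>i. ball (x i n) (r i n)) {1..n}) \<and>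
          (\<forall>i\<ge>1.
             (\<lambda>n. emeasure (\<mu> (j n)) (ball (x i n) (\<phi> (r i n)))) \<longlonglongrightarrow> ennreal (m i) \<and>
             (\<forall>n\<ge>i. emeasure (\<mu> (j n)) (ball (x i n) (r i n) - ball (x i n) (\<phi> (r i n)))
                        \<le> ennreal (1 / 2 ^ (n + i))) \<and>
             concentrates_from i (\<lambda>n. restr (\<mu> (j n)) (ball (x i n) (r i n))) (x i)) \<and>
          (\<exists>L::nat \<Rightarrow> ennreal.
             (\<forall>l\<ge>1. ((\<lambda>t. limsup (\<lambda>n. conc_fun
                  (restr (\<mu> (j n)) (UNIV - (\<Union>i\<in>{1..l}. ball (x i n) (r i n)))) t)) \<longlongrightarrow> L l) at_top)
             \<and> L \<longlonglongrightarrow> 0) \<and>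
          vanishing (\<lambda>n. restr (\<mu> (j n)) (UNIV - (\<Union>i\<in>{1..n}. ball (x i n) (r i n)))))))"
  proof -
  have "limsup (\<lambda>n. emeasure (\<mu> n) UNIV) < top" using bounded by simp
  then obtain y where y1: "limsup (\<lambda>n. emeasure (\<mu> n) UNIV) < y" and y2: "y < top"
    using dense by blast
  have "eventually (\<lambda>n. emeasure (\<mu> n) UNIV < y) sequentially" by (rule Limsup_lessD[OF y1])
  then obtain N where N: "\<And>n. n \<ge> N \<Longrightarrow> emeasure (\<mu> n) UNIV < y"
    unfolding eventually_sequentially by blast
  define C where "C = max 1 (enn2real y)"
  have yC: "y \<le> ennreal C"
  proof -
    have "y = ennreal (enn2real y)" using ennreal_enn2real[OF y2] by simp
    also have "\<dots> \<le> ennreal C" unfolding C_def by (intro ennreal_leI) simp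
    finally show ?thesis .
  qed
  define N0 where "N0 = max N 1"
  interpret L \<mu> \<phi> N0 C
  proof
    show "1 \<le> N0" unfolding N0_def by simp
    fix n assume n: "N0 \<le> n"
    then have n1: "1 \<le> n" and nN: "N \<le> n" unfolding N0_def by auto
    show "sets (\<mu> n) = sets borel" by (rule borel[OF n1])
    have "emeasure (\<mu> n) UNIV < y" by (rule N[OF nN])
    then show "emeasure (\<mu> n) UNIV \<le> ennreal C" using yC by simp
  next
    show "0 < C" unfolding C_def by simp
  next
    fix s :: real assume "0 \<le> s" then show "0 \<le> \<phi> s" by (rule phi_nonneg)
  next
    show "mono_on {0..} \<phi>" by (rule phi_mono)
  next
    fix s :: real assume "0 \<le> s" then show "\<phi> s \<le> s / 2" by (rule phi_half)
  next
    show "filterlim \<phi> at_top at_top" by (rule phi_lim)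
  qed
  show ?thesis
  proof (cases "vanishing \<mu>")
    case True
    then show ?thesis by (rule disjI1)
  next
    case False
    then show ?thesis by (rule disjI2[OF main_L])
  qed
qed



end
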